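(* Let $d\geq1$ be an integer, $j,j'\in\{0,\dots,d-1\}$, $0<\sigma_q^2<1/2$, $0<\sigma_p^2<1/2$, $\Gamma>0$, $\Lambda=1-4\sigma_q^2\sigma_p^2$, and let $$\boldsymbol\tau=\begin{pmatrix}\frac{i\sigma_p^2\Gamma^2}{2\pi\Lambda}&-\frac12\\-\frac12&\frac{2\pi i\sigma_q^2\Lambda}{\Gamma^2}\end{pmatrix}.$$ Then $$N_{\sigma_q^2,\sigma_p^2,\Gamma,j}=\Theta\!\begin{bmatrix}(\frac{2j}{d},0)^{\top}\\(0,\frac jd)^{\top}\end{bmatrix}\!(\vec0,\boldsymbol\tau),\qquad \langle j'_{\sigma_q^2,\sigma_p^2,\Gamma}|j_{\sigma_q^2,\sigma_p^2,\Gamma}\rangle=\frac{1}{\sqrt{N_{\sigma_q^2,\sigma_p^2,\Gamma,j}N_{\sigma_q^2,\sigma_p^2,\Gamma,j'}}}\,\Theta\!\begin{bmatrix}(\frac{j+j'}{d},0)^{\top}\\(0,\frac{j'}{d})^{\top}\end{bmatrix}\!(\vec0,\boldsymbol\tau).$$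
   Context: Units $\hbar=1$; $\hat q,\hat p$ canonical operators of one bosonic mode, $[\hat q,\hat p]=i$; $|q\rangle_{\hat q}$ generalized position eigenstates with ${}_{\hat q}\langle q|q'\rangle_{\hat q}=\delta(q-q')$. Functions: $G_{\sigma^2}(x)=(2\pi\sigma^2)^{-1/2}e^{-x^2/(2\sigma^2)}$; $(f*g)(x)=\int f(y)g(x-y)dy$; $E_{\mu,\Gamma,a}(x)=e^{-x^2/(2\mu)}\sum_{s\in\mathbb Z}\delta(x-(s+a)\Gamma)$. Riemann theta function with characteristics: for $\vec z\in\mathbb C^n$, symmetric $\boldsymbol\tau\in\mathbb C^{n\times n}$ with $\mathrm{Im}\,\boldsymbol\tau>0$, and $\vec a,\vec b\in\mathbb Q^n$, $\Theta\!\begin{bmatrix}\vec a\\ \vec b\end{bmatrix}\!(\vec z,\boldsymbol\tau)=\sum_{\vec s\in\mathbb Z^n}\exp[\pi i(\vec s+\vec a)^{\top}\boldsymbol\tau(\vec s+\vec a)+2\pi i(\vec z+\vec b)^{\top}(\vec s+\vec a)]$. Standard-form approximate GKP state: $|j_{\sigma_q^2,\sigma_p^2,\Gamma}\rangle$ has position wave function ${}_{\hat q}\langle q|j_{\sigma_q^2,\sigma_p^2,\Gamma}\rangle=\Big(\frac{2\Gamma\Lambda^{-1/2}}{N_{\sigma_q^2,\sigma_p^2,\Gamma,j}}\Big)^{1/2}\big(E_{\frac{\Lambda}{2\sigma_p^2},\Gamma,\frac jd}*G_{2\sigma_q^2}\big)(q)$, where $N_{\sigma_q^2,\sigma_p^2,\Gamma,j}>0$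 is the constant making it unit-norm. *)

theory Defs
  imports "HOL-Analysis.Analysis"
begin

definition gauss :: "real \<Rightarrow> real \<Rightarrow> real" where
  "gauss v x = exp (- x\<^sup>2 / (2 * v)) / sqrt (2 * pi * v)"

text \<open>Convolution of the Dirac comb E_{mu,Gamma,a}(x) = exp(-x^2/(2 mu)) sum_s delta(x-(s+a)Gamma)
  with the Gaussian G_{v}, written out: (E * G)(q) = sum_s exp(-((s+a)Gamma)^2/(2mu)) G_v(q-(s+a)Gamma).\<close>
definition comb_conv_gauss :: "real \<Rightarrow> real \<Rightarrow> real \<Rightarrow> real \<Rightarrow> real \<Rightarrow> real" where
  "comb_conv_gauss \<mu> \<Gamma> a v q =
     (\<Sum>\<^sub>\<infinity>s::int. exp (- ((of_int s + a) * \<Gamma>)\<^sup>2 / (2 * \<mu>)) * gauss v (q - (of_int s + a) * \<Gamma>))"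

definition gkp_Lambda :: "real \<Rightarrow> real \<Rightarrow> real" where
  "gkp_Lambda sq sp = 1 - 4 * sq * sp"

definition gkp_profile :: "real \<Rightarrow> real \<Rightarrow> real \<Rightarrow> nat \<Rightarrow> nat \<Rightarrow> real \<Rightarrow> real" where
  "gkp_profile sq sp \<Gamma> d j q =
     comb_conv_gauss (gkp_Lambda sq sp / (2 * sp)) \<Gamma> (real j / real d) (2 * sq) q"

text \<open>The normalisation constant N: the (unique positive) constant such that the wave function
  sqrt(2 Gamma Lambda^(-1/2) / N) * profile has unit L2 norm, i.e.
  N = 2 Gamma Lambda^(-1/2) * integral of profile^2.\<close>
definition gkp_N :: "real \<Rightarrow> real \<Rightarrow> real \<Rightarrow> nat \<Rightarrow> nat \<Rightarrow> real" where
  "gkp_N sq sp \<Gamma> d j =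
     2 * \<Gamma> / sqrt (gkp_Lambda sq sp) * (LINT q|lborel. (gkp_profile sq sp \<Gamma> d j q)\<^sup>2)"

text \<open>Position wave function of the standard-form approximate GKP state |j_{sq,sp,Gamma}>.\<close>
definition gkp_wf :: "real \<Rightarrow> real \<Rightarrow> real \<Rightarrow> nat \<Rightarrow> nat \<Rightarrow> real \<Rightarrow> real" where
  "gkp_wf sq sp \<Gamma> d j q =
     sqrt (2 * \<Gamma> / sqrt (gkp_Lambda sq sp) / gkp_N sq sp \<Gamma> d j) * gkp_profile sq sp \<Gamma> d j q"

text \<open>Inner product <j'|j> = integral of conj(psi_j'(q)) psi_j(q) dq (wave functions are real).\<close>
definition gkp_inner :: "real \<Rightarrow> real \<Rightarrow> real \<Rightarrow> nat \<Rightarrow> nat \<Rightarrow> nat \<Rightarrow> real" where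
  "gkp_inner sq sp \<Gamma> d j' j = (LINT q|lborel. gkp_wf sq sp \<Gamma> d j' q * gkp_wf sq sp \<Gamma> d j q)"

text \<open>Riemann theta function with rational characteristics in dimension n; vectors are
  functions on {0..<n}, the lattice Z^n is the set of integer functions vanishing from n on.\<close>
definition riemann_theta ::
  "nat \<Rightarrow> (nat \<Rightarrow> rat) \<Rightarrow> (nat \<Rightarrow> rat) \<Rightarrow> (nat \<Rightarrow> complex) \<Rightarrow> (nat \<Rightarrow> nat \<Rightarrow> complex) \<Rightarrow> complex" where
  "riemann_theta n a b z \<tau> =
     (\<Sum>\<^sub>\<infinity>s\<in>{s::nat \<Rightarrow> int. \<forall>i\<ge>n. s i = 0}.
        exp (pi * \<i> * (\<Sum>k<n. \<Sum>l<n. (of_int (s k) + of_rat (a k)) * \<tau> k l * (of_int (s l) + of_rat (a l)))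
             + 2 * pi * \<i> * (\<Sum>k<n. (z k + of_rat (b k)) * (of_int (s k) + of_rat (a k)))))"

end

theory Submission
  imports Defs "HOL-Probability.Probability"
begin

lemma summable_on_int_split:
  fixes f :: "int \<Rightarrow> real"
  assumes "\<And>k. f k \<ge> 0" "summable (\<lambda>n. f (int n))" "summable (\<lambda>n. f (- int n))"
  shows "f summable_on UNIV"
proof -
  have 1: "f summable_on (range int)"
    using assms by (subst summable_on_reindex) (auto simp: o_def summable_on_UNIV_nonneg_real_iff)
  have 2: "f summable_on (range (\<lambda>n. - int n))"
    using assms by (subst summable_on_reindex) (auto simp: o_def summable_on_UNIV_nonneg_real_iff inj_on_def)
  have "UNIV = range int \<union> range (\<lambda>n. - int n)"
  proof (intro set_eqI iffI)
    fix k :: int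
    show "k \<in> range int \<union> range (\<lambda>n. - int n)"
    proof (cases "k \<ge> 0")
      case True then show ?thesis by (auto intro!: image_eqI[of k int "nat k"])
    next
      case False then show ?thesis by (auto intro!: image_eqI[of k "\<lambda>n. - int n" "nat (- k)"])
    qed
  qed auto
  then show ?thesis using summable_on_union[OF 1 2] by simp
qed

lemma gauss_int_summable0:
  fixes b :: real assumes "b > 0"
  shows "(\<lambda>k::int. exp (- b * (real_of_int k)\<^sup>2)) summable_on UNIV"
proof (rule summable_on_int_split)
  have geo: "summable (\<lambda>n. exp (- b) ^ n)" using assms by (intro summable_geometric) auto
  have le: "exp (- b * (real n)\<^sup>2) \<le> exp (- b) ^ n" for n :: nat
  proof -
    have "real n \<le> (real n)\<^sup>2" by (cases n) (auto simp: power2_eq_square)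
    then have "- b * (real n)\<^sup>2 \<le> - b * real n" using assms by (simp add: mult_left_mono)
    then show ?thesis by (simp add: exp_of_nat_mult[symmetric] mult.commute)
  qed
  show "summable (\<lambda>n. exp (- b * (real_of_int (int n))\<^sup>2))"
    by (rule summable_comparison_test'[OF geo]) (use le in auto)
  show "summable (\<lambda>n. exp (- b * (real_of_int (- int n))\<^sup>2))"
    by (rule summable_comparison_test'[OF geo]) (use le in auto)
qed auto

lemma sq_shift_ge: "(x + c)\<^sup>2 \<ge> x\<^sup>2 / 2 - c\<^sup>2" for x c :: real
proof -
  have "0 \<le> (x + 2 * c)\<^sup>2" by simp
  then show ?thesis by (simp add: power2_eq_square algebra_simps)
qed

lemma gauss_shift_bound:
  fixes b c x :: real assumes "b > 0"
  shows "exp (- b * (x + c)\<^sup>2) \<le> exp (b * c\<^sup>2) * exp (- (b/2) * x\<^sup>2)"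
proof -
  have "- b * (x + c)\<^sup>2 \<le> b * c\<^sup>2 + (- (b/2) * x\<^sup>2)"
    using mult_left_mono[OF sq_shift_ge[of x c], of b] assms by (simp add: algebra_simps)
  then show ?thesis by (simp add: exp_add[symmetric])
qed

lemma gauss_int_summable:
  fixes b c :: real assumes "b > 0"
  shows "(\<lambda>k::int. exp (- b * (real_of_int k + c)\<^sup>2)) summable_on UNIV"
proof (rule summable_on_comparison_test)
  show "(\<lambda>k::int. exp (b * c\<^sup>2) * exp (- (b/2) * (real_of_int k)\<^sup>2)) summable_on UNIV"
    by (intro summable_on_cmult_right gauss_int_summable0) (use assms in auto)
qed (use gauss_shift_bound[OF assms] in auto)


lemma continuous_on_infsum_M:
  fixes f :: "'i \<Rightarrow> 'a::topological_space \<Rightarrow> 'b::banach"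
  assumes "\<And>i. continuous_on S (f i)" "\<And>i x. x \<in> S \<Longrightarrow> norm (f i x) \<le> M i" "M summable_on UNIV"
  shows "continuous_on S (\<lambda>x. \<Sum>\<^sub>\<infinity>i. f i x)"
proof (rule uniform_limit_theorem)
  show "uniform_limit S (\<lambda>X y. \<Sum>x\<in>X. f x y) (\<lambda>y. \<Sum>\<^sub>\<infinity>x. f x y) (finite_subsets_at_top UNIV)"
    by (rule Weierstrass_m_test_general) (use assms in auto)
  show "\<forall>\<^sub>F X in finite_subsets_at_top UNIV. continuous_on S (\<lambda>y. \<Sum>x\<in>X. f x y)"
    by (intro always_eventually allI continuous_on_sum) (use assms in auto)
qed simp

lemma infsum_nat_suminf:
  fixes g :: "nat \<Rightarrow> 'b::{banach}"
  assumes "g summable_on UNIV"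
  shows "infsum g UNIV = suminf g"
  using has_sum_imp_sums[OF has_sum_infsum[OF assms]] by (simp add: sums_iff)

lemma integral_infsum:
  fixes f :: "'i::countable \<Rightarrow> 'a \<Rightarrow> 'b::{banach, second_countable_topology}"
  assumes inf: "infinite (UNIV::'i set)"
    and int: "\<And>i. integrable M (f i)"
    and sx: "\<And>x. (\<lambda>i. norm (f i x)) summable_on UNIV"
    and si: "(\<lambda>i. \<integral>x. norm (f i x) \<partial>M) summable_on UNIV"
  shows "integrable M (\<lambda>x. \<Sum>\<^sub>\<infinity>i. f i x)" and "(\<integral>x. (\<Sum>\<^sub>\<infinity>i. f i x) \<partial>M) = (\<Sum>\<^sub>\<infinity>i. \<integral>x. f i x \<partial>M)"
proof -
  define e where "e = from_nat_into (UNIV::'i set)"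
  have bij: "bij_betw e UNIV UNIV" unfolding e_def by (rule bij_betw_from_nat_into) (use inf in auto)
  define g where "g n x = f (e n) x" for n x
  have gs: "(\<lambda>n. norm (g n x)) summable_on UNIV" for x
    using sx[of x] summable_on_reindex_bij_betw[OF bij, of "\<lambda>i. norm (f i x)"] by (simp add: g_def)
  have gs': "summable (\<lambda>n. norm (g n x))" for x using summable_on_imp_summable[OF gs] .
  have gsi: "(\<lambda>n. \<integral>x. norm (g n x) \<partial>M) summable_on UNIV"
    using si summable_on_reindex_bij_betw[OF bij, of "\<lambda>i. \<integral>x. norm (f i x) \<partial>M"] by (simp add: g_def)
  have gsi': "summable (\<lambda>n. \<integral>x. norm (g n x) \<partial>M)" using summable_on_imp_summable[OF gsi] .
  have gint: "integrable M (g n)" for n using int[of "e n"] by (simp add: g_def[abs_def])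
  have eq1: "(\<Sum>\<^sub>\<infinity>i. f i x) = (\<Sum>n. g n x)" for x
  proof -
    have "(\<Sum>\<^sub>\<infinity>i. f i x) = (\<Sum>\<^sub>\<infinity>n. g n x)"
      using infsum_reindex_bij_betw[OF bij, of "\<lambda>i. f i x"] by (simp add: g_def)
    also have "\<dots> = (\<Sum>n. g n x)"
      by (rule infsum_nat_suminf) (rule norm_summable_imp_summable_on[OF gs'])
    finally show ?thesis .
  qed
  show "integrable M (\<lambda>x. \<Sum>\<^sub>\<infinity>i. f i x)"
    unfolding eq1 by (rule integrable_suminf[OF gint]) (use gs' gsi' in auto)
  have "(\<integral>x. (\<Sum>\<^sub>\<infinity>i. f i x) \<partial>M) = (\<Sum>n. \<integral>x. g n x \<partial>M)"
    unfolding eq1 by (rule integral_suminf[OF gint]) (use gs' gsi' in auto)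
  also have "\<dots> = (\<Sum>\<^sub>\<infinity>n. \<integral>x. g n x \<partial>M)"
  proof (rule infsum_nat_suminf[symmetric], rule norm_summable_imp_summable_on)
    show "summable (\<lambda>n. norm (\<integral>x. g n x \<partial>M))"
      by (rule summable_comparison_test'[OF gsi']) (auto intro: integral_norm_bound)
  qed
  also have "\<dots> = (\<Sum>\<^sub>\<infinity>i. \<integral>x. f i x \<partial>M)"
    using infsum_reindex_bij_betw[OF bij, of "\<lambda>i. \<integral>x. f i x \<partial>M"] by (simp add: g_def)
  finally show "(\<integral>x. (\<Sum>\<^sub>\<infinity>i. f i x) \<partial>M) = (\<Sum>\<^sub>\<infinity>i. \<integral>x. f i x \<partial>M)" .
qed


definition trig_sum :: "(complex \<times> int) list \<Rightarrow> real \<Rightarrow> complex" where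
  "trig_sum L x = sum_list (map (\<lambda>(c,n). c * cis (2 * pi * of_int n * x)) L)"

lemma tsum_Nil[simp]: "trig_sum [] x = 0" by (simp add: trig_sum_def)
lemma tsum_Cons[simp]: "trig_sum ((c,n) # L) x = c * cis (2 * pi * of_int n * x) + trig_sum L x"
  by (simp add: trig_sum_def)
lemma tsum_append[simp]: "trig_sum (L1 @ L2) x = trig_sum L1 x + trig_sum L2 x"
  by (simp add: trig_sum_def)

lemma tsum_shift: "trig_sum (map (\<lambda>(d,m). (c * d, n + m)) L) x = c * cis (2 * pi * of_int n * x) * trig_sum L x"
proof (induction L)
  case (Cons a L)
  obtain d m where a: "a = (d, m)" by (cases a)
  have "cis (2 * pi * of_int (n + m) * x) = cis (2 * pi * of_int n * x) * cis (2 * pi * of_int m * x)"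
    by (simp add: cis_mult algebra_simps)
  then show ?case using Cons by (simp add: a algebra_simps)
qed simp

lemma tsum_mult: "trig_sum L1 x * trig_sum L2 x = trig_sum (concat (map (\<lambda>(c,n). map (\<lambda>(d,m). (c * d, n + m)) L2) L1)) x"
proof (induction L1)
  case (Cons a L)
  obtain c n where a: "a = (c, n)" by (cases a)
  show ?case using Cons by (simp add: a tsum_shift distrib_right trig_sum_def[of "_ @ _"])
qed simp

lemma cos_as_cis: "complex_of_real (cos t) = (cis t + cis (- t)) / 2"
  by (simp add: complex_eq_iff)

lemma bounded_linear_complex_real:
  fixes l :: "complex \<Rightarrow> real"
  assumes "bounded_linear l"
  shows "l w = Re w * l 1 + Im w * l \<i>"
proof -
  interpret linear l using assms bounded_linear.linear by blast
  have "w = Re w *\<^sub>R 1 + Im w *\<^sub>R \<i>" by (simp add: complex_eq_iff)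
  then have "l w = l (Re w *\<^sub>R 1 + Im w *\<^sub>R \<i>)" by simp
  also have "\<dots> = Re w * l 1 + Im w * l \<i>" by (simp add: add scale)
  finally show ?thesis .
qed

lemma real_poly_tsum:
  fixes p :: "complex \<Rightarrow> real"
  assumes "real_polynomial_function p"
  shows "\<exists>L. \<forall>x. complex_of_real (p (cis (2 * pi * x))) = trig_sum L x"
  using assms
proof (induction p rule: real_polynomial_function.induct)
  case (linear l)
  define a where "a = l 1" define b where "b = l \<i>"
  let ?L = "[(complex_of_real a / 2 - \<i> * complex_of_real b / 2, 1), (complex_of_real a / 2 + \<i> * complex_of_real b / 2, -1)]"
  have "complex_of_real (l (cis (2 * pi * x))) = trig_sum ?L x" for x
    using bounded_linear_complex_real[OF linear, of "cis (2 * pi * x)"]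
    by (simp add: a_def b_def complex_eq_iff algebra_simps)
  then show ?case by blast
next
  case (const c)
  have "complex_of_real c = trig_sum [(complex_of_real c, 0)] x" for x by simp
  then show ?case by blast
next
  case (add f g)
  then obtain L1 L2 where "\<forall>x. complex_of_real (f (cis (2 * pi * x))) = trig_sum L1 x"
      "\<forall>x. complex_of_real (g (cis (2 * pi * x))) = trig_sum L2 x" by blast
  then have "\<forall>x. complex_of_real (f (cis (2 * pi * x)) + g (cis (2 * pi * x))) = trig_sum (L1 @ L2) x" by simp
  then show ?case by blast
next
  case (mult f g)
  then obtain L1 L2 where "\<forall>x. complex_of_real (f (cis (2 * pi * x))) = trig_sum L1 x"
      "\<forall>x. complex_of_real (g (cis (2 * pi * x))) = trig_sum L2 x" by blast
  then have "\<forall>x. complex_of_real (f (cis (2 * pi * x)) * g (cis (2 * pi * x))) = trig_sum L1 x * trig_sum L2 x" by simp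
  then show ?case unfolding tsum_mult by blast
qed


lemma tsum_scale: "trig_sum (map (\<lambda>(c,n). (k * c, n)) L) x = k * trig_sum L x"
  by (induction L) (auto simp: algebra_simps)

lemma continuous_tsum: "continuous_on S (trig_sum L)"
  by (induction L) (auto intro!: continuous_intros simp: trig_sum_def[abs_def])

lemma periodic_int:
  fixes H :: "real \<Rightarrow> 'a"
  assumes per: "\<And>x. H (x + 1) = H x"
  shows "H (x + of_int k) = H x"
proof (induction k rule: int_induct[where k=0])
  case base then show ?case by simp
next
  case (step1 i) then show ?case using per[of "x + of_int i"] by (simp add: add.assoc)
next
  case (step2 i) then show ?case using per[of "x + of_int (i - 1)"] by (simp add: add.assoc)
qed

lemma cis_eq_imp: "cis a = cis b \<Longrightarrow> \<exists>n::int. a = b + 2 * pi * of_int n"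
proof -
  assume "cis a = cis b"
  then have "sin a = sin b \<and> cos a = cos b" by (metis cis.sel)
  then show ?thesis using sin_cos_eq_iff by blast
qed

lemma Arg_cis_ex: "\<exists>n::int. Arg (cis t) = t + 2 * pi * of_int n"
proof -
  have "cis (Arg (cis t)) = cis t"
    by (subst cis_Arg) (auto simp: sgn_div_norm)
  then show ?thesis by (rule cis_eq_imp)
qed

lemma Arg_minus_ex:
  assumes "w \<noteq> 0" shows "\<exists>n::int. Arg (- w) + pi = Arg w + 2 * pi * of_int n"
proof -
  have "cis (Arg (- w) + pi) = - cis (Arg (- w))" by (simp add: cis_mult[symmetric])
  also have "\<dots> = sgn w" using assms by (simp add: cis_Arg sgn_minus)
  also have "\<dots> = cis (Arg w)" using assms by (simp add: cis_Arg)
  finally show ?thesis by (rule cis_eq_imp)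
qed

lemma fourier_unique:
  fixes H :: "real \<Rightarrow> complex"
  assumes cont: "continuous_on UNIV H" and per: "\<And>x. H (x + 1) = H x"
    and coef: "\<And>n::int. (\<integral>x. H x * cis (2 * pi * of_int n * x) \<partial>lebesgue_on {0..1}) = 0"
  shows "H x = 0"
proof -
  have Hc: "isCont H y" for y using cont by (simp add: continuous_on_eq_continuous_at)
  define g where "g w = H (Arg w / (2 * pi))" for w
  have g_cis: "g (cis (2 * pi * x)) = H x" for x
  proof -
    obtain n :: int where "Arg (cis (2 * pi * x)) = 2 * pi * x + 2 * pi * of_int n" using Arg_cis_ex by blast
    then have "Arg (cis (2 * pi * x)) / (2 * pi) = x + of_int n" by (simp add: field_simps)
    then show ?thesis by (simp add: g_def periodic_int[of H, OF per])
  qed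
  have g_alt: "g w = H ((Arg (- w) + pi) / (2 * pi))" if w0: "w \<noteq> 0" for w
  proof -
    obtain n :: int where "Arg (- w) + pi = Arg w + 2 * pi * of_int n" using Arg_minus_ex[OF w0] by blast
    then have "(Arg (- w) + pi) / (2 * pi) = Arg w / (2 * pi) + of_int n" by (simp add: field_simps)
    then show ?thesis by (simp add: g_def periodic_int[of H, OF per])
  qed
  have gcont: "continuous_on (sphere 0 1) g"
  proof (rule continuous_at_imp_continuous_on, rule ballI)
    fix w :: complex assume w: "w \<in> sphere 0 1"
    then have w0: "w \<noteq> 0" by auto
    show "isCont g w"
    proof (cases "w \<in> \<real>\<^sub>\<le>\<^sub>0")
      case False
      have "isCont (\<lambda>w. Arg w / (2 * pi)) w" using continuous_at_Arg[OF False] by (intro continuous_intros) auto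
      then show ?thesis unfolding g_def[abs_def] using Hc by (rule isCont_o2)
    next
      case True
      have nr: "- w \<notin> \<real>\<^sub>\<le>\<^sub>0" using True w0 by (auto simp: nonpos_Reals_def)
      have "isCont (\<lambda>w. Arg (- w)) w"
        using isCont_o2[OF isCont_minus[OF continuous_ident] continuous_at_Arg[OF nr]] by simp
      then have "isCont (\<lambda>w. (Arg (- w) + pi) / (2 * pi)) w" by (intro continuous_intros) auto
      then have c2: "isCont (\<lambda>w. H ((Arg (- w) + pi) / (2 * pi))) w" using Hc by (rule isCont_o2)
      have "eventually (\<lambda>y. y \<noteq> 0) (nhds w)" using w0 by (rule t1_space_nhds)
      then have "eventually (\<lambda>y. g y = H ((Arg (- y) + pi) / (2 * pi))) (nhds w)"
        by eventually_elim (rule g_alt)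
      then have "isCont g w \<longleftrightarrow> isCont (\<lambda>w. H ((Arg (- w) + pi) / (2 * pi))) w" by (rule isCont_cong)
      with c2 show ?thesis by simp
    qed
  qed
  define M where "M = lebesgue_on {0..1::real}"
  have intc: "integrable M f" if "continuous_on UNIV f" for f :: "real \<Rightarrow> complex"
    unfolding M_def using continuous_imp_integrable[of 0 1 f] that
    by (auto intro: continuous_on_subset)
  have intr: "integrable M f" if "continuous_on UNIV f" for f :: "real \<Rightarrow> real"
    unfolding M_def using continuous_imp_integrable_real[of 0 1 f] that
    by (auto intro: continuous_on_subset)
  have HL0: "(\<integral>x. H x * trig_sum L x \<partial>M) = 0" for L
  proof (induction L)
    case Nil then show ?case by simp
  next
    case (Cons a L)
    obtain c n where a: "a = (c, n)" by (cases a)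
    have "(\<integral>x. H x * trig_sum (a # L) x \<partial>M) = (\<integral>x. c * (H x * cis (2 * pi * of_int n * x)) + H x * trig_sum L x \<partial>M)"
      by (simp add: a algebra_simps)
    also have "\<dots> = (\<integral>x. c * (H x * cis (2 * pi * of_int n * x)) \<partial>M) + (\<integral>x. H x * trig_sum L x \<partial>M)"
      by (rule Bochner_Integration.integral_add) (auto intro!: intc continuous_intros cont continuous_tsum)
    also have "\<dots> = 0" using Cons coef[of n] by (simp add: M_def)
    finally show ?case .
  qed
  define A where "A = (\<integral>x. (norm (H x))\<^sup>2 \<partial>M)"
  define B where "B = (\<integral>x. norm (H x) \<partial>M)"
  have contn: "continuous_on UNIV (\<lambda>x. (norm (H x))\<^sup>2)" "continuous_on UNIV (\<lambda>x. norm (H x))"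
    by (intro continuous_intros cont)+
  have A0: "A \<ge> 0" unfolding A_def by (rule integral_nonneg_AE) auto
  have AB: "A \<le> 2 * e * B" if e: "e > 0" for e
  proof -
    have "compact (sphere (0::complex) 1)" by simp
    obtain p1 where p1: "real_polynomial_function p1" "\<And>w. w \<in> sphere 0 1 \<Longrightarrow> \<bar>Re (g w) - p1 w\<bar> < e"
      using Stone_Weierstrass_real_polynomial_function[of "sphere 0 1" "\<lambda>w. Re (g w)" e] e gcont
      by (auto intro: continuous_intros)
    obtain p2 where p2: "real_polynomial_function p2" "\<And>w. w \<in> sphere 0 1 \<Longrightarrow> \<bar>Im (g w) - p2 w\<bar> < e"
      using Stone_Weierstrass_real_polynomial_function[of "sphere 0 1" "\<lambda>w. Im (g w)" e] e gcont
      by (auto intro: continuous_intros)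
    obtain L1 where L1: "\<And>x. complex_of_real (p1 (cis (2 * pi * x))) = trig_sum L1 x" using real_poly_tsum[OF p1(1)] by blast
    obtain L2 where L2: "\<And>x. complex_of_real (p2 (cis (2 * pi * x))) = trig_sum L2 x" using real_poly_tsum[OF p2(1)] by blast
    define L where "L = L1 @ map (\<lambda>(c,n). (- \<i> * c, n)) L2"
    have qL: "trig_sum L x = complex_of_real (p1 (cis (2 * pi * x))) - \<i> * complex_of_real (p2 (cis (2 * pi * x)))" for x
      using tsum_scale[of "- \<i>" L2 x] by (simp add: L_def L1 L2)
    have close: "norm (cnj (H x) - trig_sum L x) \<le> 2 * e" for x
    proof -
      have "cis (2 * pi * x) \<in> sphere 0 1" by simp
      then have "\<bar>Re (H x) - p1 (cis (2 * pi * x))\<bar> < e" "\<bar>Im (H x) - p2 (cis (2 * pi * x))\<bar> < e"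
        using p1(2)[of "cis (2 * pi * x)"] p2(2)[of "cis (2 * pi * x)"] g_cis[of x] by auto
      moreover have "cnj (H x) - trig_sum L x = complex_of_real (Re (H x) - p1 (cis (2 * pi * x))) - \<i> * complex_of_real (Im (H x) - p2 (cis (2 * pi * x)))"
        by (simp add: qL complex_eq_iff)
      moreover have "norm (complex_of_real a - \<i> * complex_of_real b) \<le> \<bar>a\<bar> + \<bar>b\<bar>" for a b
        using norm_triangle_ineq4[of "complex_of_real a" "\<i> * complex_of_real b"] by (simp add: norm_mult)
      ultimately show ?thesis by (smt (verit))
    qed
    have "complex_of_real A = (\<integral>x. H x * cnj (H x) \<partial>M)"
      unfolding A_def integral_complex_of_real[symmetric] complex_norm_square ..
    also have "\<dots> = (\<integral>x. H x * (cnj (H x) - trig_sum L x) \<partial>M) + (\<integral>x. H x * trig_sum L x \<partial>M)"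
      by (subst Bochner_Integration.integral_add[symmetric]) (auto intro!: intc continuous_intros cont continuous_tsum simp: algebra_simps)
    also have "\<dots> = (\<integral>x. H x * (cnj (H x) - trig_sum L x) \<partial>M)" using HL0 by simp
    finally have "A = norm (\<integral>x. H x * (cnj (H x) - trig_sum L x) \<partial>M)" using A0 by (metis norm_of_real abs_of_nonneg)
    also have "\<dots> \<le> (\<integral>x. norm (H x) * (2 * e) \<partial>M)"
    proof (rule Bochner_Integration.integral_norm_bound_integral)
      show "integrable M (\<lambda>x. H x * (cnj (H x) - trig_sum L x))" by (auto intro!: intc continuous_intros cont continuous_tsum)
      show "integrable M (\<lambda>x. norm (H x) * (2 * e))" by (auto intro!: intr continuous_intros cont)
      show "norm (H x * (cnj (H x) - trig_sum L x)) \<le> norm (H x) * (2 * e)" for x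
        using close[of x] by (simp add: norm_mult mult_left_mono)
    qed
    also have "\<dots> = 2 * e * B" unfolding B_def by simp
    finally show ?thesis .
  qed
  have B0: "B \<ge> 0" unfolding B_def by (rule integral_nonneg_AE) auto
  have "A = 0"
  proof (rule ccontr)
    assume "A \<noteq> 0" then have "A > 0" using A0 by simp
    then have "A \<le> 2 * (A / (4 * (B + 1))) * B" using AB[of "A / (4 * (B + 1))"] B0 by simp
    moreover have "2 * (A / (4 * (B + 1))) * B < A" using \<open>A > 0\<close> B0
      by (simp add: field_simps) (simp add: add_pos_nonneg)
    ultimately show False by simp
  qed
  moreover have "continuous_on {0..1} (\<lambda>x. (norm (H x))\<^sup>2)"
    using contn(1) by (rule continuous_on_subset) simp
  ultimately have z01: "\<forall>y\<in>{0..1}. (norm (H y))\<^sup>2 = 0"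
    using integralL_eq_0_iff[of 0 1 "\<lambda>x. (norm (H x))\<^sup>2"] unfolding A_def M_def
    by simp
  have "H x = H (x - of_int \<lfloor>x\<rfloor> + of_int \<lfloor>x\<rfloor>)" by simp
  also have "\<dots> = H (x - of_int \<lfloor>x\<rfloor>)" by (rule periodic_int[of H, OF per])
  also have "\<dots> = 0" using z01[rule_format, of "x - of_int \<lfloor>x\<rfloor>"]
    by (simp add: frac_lt_1[unfolded frac_def] less_imp_le)
  finally show ?thesis .
qed


lemma gauss_as_normal:
  fixes a :: real assumes a: "a > 0"
  shows "exp (- a * x\<^sup>2) = sqrt (pi / a) * normal_density 0 (sqrt (1 / (2 * a))) x"
proof -
  have s2: "(sqrt (1 / (2 * a)))\<^sup>2 = 1 / (2 * a)" using a by simp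
  have "sqrt (2 * pi * (1 / (2 * a))) = sqrt (pi / a)" by simp
  then show ?thesis using a unfolding normal_density_def s2
    by (simp add: field_simps)
qed

lemma gauss_eq_normal: "(a::real) > 0 \<Longrightarrow> (\<lambda>x. exp (- a * x\<^sup>2)) = (\<lambda>x. sqrt (pi / a) * normal_density 0 (sqrt (1 / (2 * a))) x)"
  using gauss_as_normal by auto

lemma gauss_integrable: "(a::real) > 0 \<Longrightarrow> integrable lborel (\<lambda>x. exp (- a * x\<^sup>2))"
proof -
  assume a: "a > 0"
  have "integrable lborel (\<lambda>x. sqrt (pi / a) * normal_density 0 (sqrt (1 / (2 * a))) x)" using a by (intro integrable_mult_right integrable_normal_density) auto
  then show ?thesis using gauss_eq_normal[OF a] by simp
qed

lemma gauss_integral: "(a::real) > 0 \<Longrightarrow> (\<integral>x. exp (- a * x\<^sup>2) \<partial>lborel) = sqrt (pi / a)"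
  by (subst gauss_eq_normal) auto

lemma std_normal_ft: "(\<integral>x. std_normal_density x *\<^sub>R cis (s * x) \<partial>lborel) = complex_of_real (exp (- s\<^sup>2 / 2))"
proof -
  have "char std_normal_distribution s = complex_of_real (exp (- s\<^sup>2 / 2))"
    by (simp add: char_std_normal_distribution)
  moreover have "char std_normal_distribution s = (\<integral>x. std_normal_density x *\<^sub>R cis (s * x) \<partial>lborel)"
    unfolding char_def by (subst integral_density) (auto simp: cis_conv_exp mult.commute)
  ultimately show ?thesis by simp
qed

lemma gauss_ft_integrable: "(a::real) > 0 \<Longrightarrow> integrable lborel (\<lambda>x. complex_of_real (exp (- a * x\<^sup>2)) * cis (t * x))"
proof -
  assume a: "a > 0"
  show ?thesis
  proof (rule Bochner_Integration.integrable_bound[OF integrable_of_real[OF gauss_integrable[OF a]]])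
    show "AE x in lborel. norm (complex_of_real (exp (- a * x\<^sup>2)) * cis (t * x)) \<le> norm (complex_of_real (exp (- a * x\<^sup>2)))"
      by (simp add: norm_mult)
  qed (auto intro!: borel_measurable_continuous_onI continuous_intros)
qed

lemma gauss_ft:
  fixes a t :: real assumes a: "a > 0"
  shows "(\<integral>x. complex_of_real (exp (- a * x\<^sup>2)) * cis (t * x) \<partial>lborel) = complex_of_real (sqrt (pi / a) * exp (- t\<^sup>2 / (4 * a)))"
proof -
  define c where "c = 1 / sqrt (2 * a)"
  have c0: "c > 0" using a by (simp add: c_def)
  have cc: "c\<^sup>2 = 1 / (2 * a)" using a by (simp add: c_def power_divide)
  have "(\<integral>x. complex_of_real (exp (- a * x\<^sup>2)) * cis (t * x) \<partial>lborel)
      = \<bar>c\<bar> *\<^sub>R (\<integral>y. complex_of_real (exp (- a * (0 + c * y)\<^sup>2)) * cis (t * (0 + c * y)) \<partial>lborel)"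
    by (rule lborel_integral_real_affine) (use c0 in auto)
  also have "(\<lambda>y. complex_of_real (exp (- a * (0 + c * y)\<^sup>2)) * cis (t * (0 + c * y)))
      = (\<lambda>y. complex_of_real (sqrt (2 * pi)) * (std_normal_density y *\<^sub>R cis ((t * c) * y)))"
  proof
    fix y
    have "a * (c * y)\<^sup>2 = y\<^sup>2 / 2" using a by (simp add: power_mult_distrib cc)
    then show "complex_of_real (exp (- a * (0 + c * y)\<^sup>2)) * cis (t * (0 + c * y))
      = complex_of_real (sqrt (2 * pi)) * (std_normal_density y *\<^sub>R cis ((t * c) * y))"
      by (simp add: std_normal_density_def scaleR_conv_of_real mult_ac)
  qed
  also have "(\<integral>y. complex_of_real (sqrt (2 * pi)) * (std_normal_density y *\<^sub>R cis ((t * c) * y)) \<partial>lborel)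
      = complex_of_real (sqrt (2 * pi)) * complex_of_real (exp (- (t * c)\<^sup>2 / 2))"
    unfolding Bochner_Integration.integral_mult_right_zero std_normal_ft ..
  also have "\<bar>c\<bar> *\<^sub>R (complex_of_real (sqrt (2 * pi)) * complex_of_real (exp (- (t * c)\<^sup>2 / 2)))
      = complex_of_real (sqrt (pi / a) * exp (- t\<^sup>2 / (4 * a)))"
  proof -
    have "\<bar>c\<bar> * sqrt (2 * pi) = sqrt (pi / a)" using c0 a
      by (simp add: c_def real_sqrt_divide real_sqrt_mult field_simps)
    moreover have "(t * c)\<^sup>2 / 2 = t\<^sup>2 / (4 * a)" using a by (simp add: power_mult_distrib cc)
    ultimately show ?thesis by (simp add: scaleR_conv_of_real mult.assoc[symmetric] of_real_mult[symmetric] del: of_real_mult)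
  qed
  finally show ?thesis .
qed


lemma lebesgue_on_lborel:
  fixes f :: "real \<Rightarrow> 'b::{banach, second_countable_topology}"
  assumes "f \<in> borel_measurable borel"
  shows "(\<integral>x. f x \<partial>lebesgue_on {a..b}) = (\<integral>x. indicator {a..b} x *\<^sub>R f x \<partial>lborel)"
proof -
  have "(\<integral>x. f x \<partial>lebesgue_on {a..b}) = (\<integral>x. indicator {a..b} x *\<^sub>R f x \<partial>lebesgue)"
    by (rule integral_restrict_space) auto
  also have "\<dots> = (\<integral>x. indicator {a..b} x *\<^sub>R f x \<partial>lborel)"
    by (rule integral_completion) (use assms in auto)
  finally show ?thesis .
qed

lemma cis_vderiv:
  fixes c :: real assumes c: "c \<noteq> 0"
  shows "((\<lambda>x. cis (c * x) / (\<i> * complex_of_real c)) has_vector_derivative cis (c * x)) (at x within S)"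
proof -
  have "((\<lambda>x. cis (c * x)) has_derivative (\<lambda>t. (c * t) *\<^sub>R (\<i> * cis (c * x)))) (at x within S)"
    by (intro has_derivative_cis derivative_intros)
  then have "((\<lambda>x. cis (c * x)) has_vector_derivative (c *\<^sub>R (\<i> * cis (c * x)))) (at x within S)"
    unfolding has_vector_derivative_def by (simp add: algebra_simps)
  then have "((\<lambda>x. cis (c * x) / (\<i> * complex_of_real c)) has_vector_derivative (c *\<^sub>R (\<i> * cis (c * x))) / (\<i> * complex_of_real c)) (at x within S)"
    by (rule has_vector_derivative_divide)
  moreover have "(c *\<^sub>R (\<i> * cis (c * x))) / (\<i> * complex_of_real c) = cis (c * x)"
    using c by (simp add: scaleR_conv_of_real field_simps)
  ultimately show ?thesis by simp
qed

lemma cis_int_integral: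
  fixes k :: int
  shows "(\<integral>x. cis (2 * pi * of_int k * x) \<partial>lebesgue_on {0..1}) = (if k = 0 then 1 else 0)"
proof -
  have "(\<integral>x. cis (2 * pi * of_int k * x) \<partial>lebesgue_on {0..1}) = (\<integral>x. indicator {0..1} x *\<^sub>R cis (2 * pi * of_int k * x) \<partial>lborel)"
    by (rule lebesgue_on_lborel) (auto intro!: borel_measurable_continuous_onI continuous_intros)
  also have "\<dots> = (if k = 0 then 1 else 0)"
  proof (cases "k = 0")
    case True
    have "(\<integral>x. indicator {0..1} x *\<^sub>R cis (2 * pi * of_int k * x) \<partial>lborel) = complex_of_real 1 - complex_of_real 0"
      by (rule integral_FTC_atLeastAtMost[where F="\<lambda>x. complex_of_real x"]) (use True in \<open>auto intro!: derivative_eq_intros continuous_intros\<close>)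
    then show ?thesis using True by simp
  next
    case False
    define c where "c = 2 * pi * of_int k"
    have c: "c \<noteq> 0" using False by (simp add: c_def)
    have "(\<integral>x. indicator {0..1} x *\<^sub>R cis (c * x) \<partial>lborel) = cis (c * 1) / (\<i> * complex_of_real c) - cis (c * 0) / (\<i> * complex_of_real c)"
      by (rule integral_FTC_atLeastAtMost[where F="\<lambda>x. cis (c * x) / (\<i> * complex_of_real c)"]) (auto intro!: cis_vderiv[OF c] continuous_intros)
    also have "cis (c * 1) = 1" by (simp add: c_def)
    finally show ?thesis using False by (simp add: c_def mult.assoc)
  qed
  finally show ?thesis .
qed


lemma infsum_single_int:
  fixes f :: "int \<Rightarrow> 'b::{comm_monoid_add, t2_space}"
  assumes "\<And>k. k \<noteq> kz \<Longrightarrow> f k = 0"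
  shows "infsum f UNIV = f kz"
proof -
  have "infsum f UNIV = infsum f {kz}" by (rule infsum_cong_neutral) (use assms in auto)
  then show ?thesis by simp
qed

lemma summable_single_int:
  fixes f :: "int \<Rightarrow> 'b::{comm_monoid_add, t2_space}"
  assumes "\<And>k. k \<noteq> kz \<Longrightarrow> f k = 0"
  shows "f summable_on UNIV"
proof -
  have "f summable_on {kz}" by simp
  then show ?thesis by (rule summable_on_cong_neutral[THEN iffD1, rotated -1]) (use assms in auto)
qed

lemma int01_const: "(\<integral>x. (c::real) \<partial>lebesgue_on {0..(1::real)}) = c"
  using lebesgue_on_lborel[of "\<lambda>x. c" 0 1] by (simp add: content_real)

lemma gk_bound:
  fixes a x R :: real assumes a: "a > 0" and xR: "\<bar>x\<bar> \<le> R"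
  shows "exp (- a * (x - of_int k)\<^sup>2) \<le> exp (a * R\<^sup>2) * exp (- (a/2) * (of_int k)\<^sup>2)"
proof -
  have "exp (- a * (of_int k + - x)\<^sup>2) \<le> exp (a * (- x)\<^sup>2) * exp (- (a/2) * (of_int k)\<^sup>2)"
    by (rule gauss_shift_bound[OF a])
  moreover have "(of_int k + - x)\<^sup>2 = (x - of_int k)\<^sup>2" by (simp add: power2_commute)
  moreover have "exp (a * (- x)\<^sup>2) \<le> exp (a * R\<^sup>2)"
  proof -
    have "x\<^sup>2 \<le> R\<^sup>2" using xR by (metis abs_le_square_iff abs_of_nonneg abs_ge_zero order_trans)
    then show ?thesis using a by (simp add: mult_left_mono)
  qed
  ultimately show ?thesis by (smt (verit) exp_gt_zero mult_right_mono)
qed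

lemma gk_summable:
  fixes a x :: real assumes a: "a > 0"
  shows "(\<lambda>k::int. exp (- a * (x - of_int k)\<^sup>2)) summable_on UNIV"
proof (rule summable_on_comparison_test)
  show "(\<lambda>k::int. exp (a * \<bar>x\<bar>\<^sup>2) * exp (- (a/2) * (of_int k)\<^sup>2)) summable_on UNIV"
    by (intro summable_on_cmult_right gauss_int_summable0) (use a in auto)
  show "exp (- a * (x - of_int k)\<^sup>2) \<le> exp (a * \<bar>x\<bar>\<^sup>2) * exp (- (a/2) * (of_int k)\<^sup>2)" for k
    by (rule gk_bound[OF a]) simp
qed auto

definition Pg :: "real \<Rightarrow> real \<Rightarrow> complex" where
  "Pg a x = (\<Sum>\<^sub>\<infinity>k::int. complex_of_real (exp (- a * (x - of_int k)\<^sup>2)))"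

definition Tg :: "real \<Rightarrow> real \<Rightarrow> complex" where
  "Tg b x = (\<Sum>\<^sub>\<infinity>m::int. complex_of_real (exp (- b * (of_int m)\<^sup>2)) * cis (2 * pi * of_int m * x))"

lemma Pg_cont:
  assumes a: "a > 0" shows "continuous_on UNIV (Pg a)"
proof (rule continuous_at_imp_continuous_on, rule ballI)
  fix y :: real
  have "continuous_on (ball y 1) (Pg a)"
    unfolding Pg_def
  proof (rule continuous_on_infsum_M)
    show "continuous_on (ball y 1) (\<lambda>x. complex_of_real (exp (- a * (x - real_of_int k)\<^sup>2)))" for k
      by (intro continuous_intros)
    show "norm (complex_of_real (exp (- a * (x - real_of_int k)\<^sup>2))) \<le> exp (a * (\<bar>y\<bar> + 1)\<^sup>2) * exp (- (a/2) * (of_int k)\<^sup>2)"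
      if "x \<in> ball y 1" for x k
    proof -
      have "\<bar>x\<bar> \<le> \<bar>y\<bar> + 1" using that by (auto simp: dist_real_def)
      then show ?thesis using gk_bound[OF a, of x "\<bar>y\<bar> + 1" k] by simp
    qed
    show "(\<lambda>k::int. exp (a * (\<bar>y\<bar> + 1)\<^sup>2) * exp (- (a/2) * (of_int k)\<^sup>2)) summable_on UNIV"
      by (intro summable_on_cmult_right gauss_int_summable0) (use a in auto)
  qed
  then show "isCont (Pg a) y" using continuous_on_eq_continuous_at[of "ball y 1" "Pg a"] by auto
qed

lemma Tg_cont:
  assumes b: "b > 0" shows "continuous_on UNIV (Tg b)"
  unfolding Tg_def
proof (rule continuous_on_infsum_M)
  show "continuous_on UNIV (\<lambda>x. complex_of_real (exp (- b * (of_int m)\<^sup>2)) * cis (2 * pi * of_int m * x))" for m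
    by (intro continuous_intros)
  show "norm (complex_of_real (exp (- b * (of_int m)\<^sup>2)) * cis (2 * pi * of_int m * x)) \<le> exp (- b * (of_int m)\<^sup>2)" for m x
    by (simp add: norm_mult)
  show "(\<lambda>m::int. exp (- b * (of_int m)\<^sup>2)) summable_on UNIV" by (rule gauss_int_summable0[OF b])
qed

lemma Pg_per: "Pg a (x + 1) = Pg a x"
proof -
  have bij: "bij_betw (\<lambda>j::int. j + 1) UNIV UNIV"
    by (rule bij_betwI[of _ _ _ "\<lambda>k. k - 1"]) auto
  have "Pg a (x + 1) = (\<Sum>\<^sub>\<infinity>j::int. complex_of_real (exp (- a * (x + 1 - of_int (j + 1))\<^sup>2)))"
    unfolding Pg_def by (rule infsum_reindex_bij_betw[OF bij, symmetric])
  also have "\<dots> = Pg a x" unfolding Pg_def by simp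
  finally show ?thesis .
qed

lemma cis_int_shift: "cis (2 * pi * of_int m * (x + of_int k)) = cis (2 * pi * of_int m * x)"
proof -
  have "cis (2 * pi * of_int m * (x + of_int k)) = cis (2 * pi * of_int m * x) * cis (2 * pi * of_int (m * k))"
    by (simp add: cis_mult algebra_simps)
  also have "cis (2 * pi * of_int (m * k)) = 1" by (rule cis_multiple_2pi) simp
  finally show ?thesis by simp
qed

lemma Tg_per: "Tg b (x + 1) = Tg b x"
  unfolding Tg_def using cis_int_shift[of _ x 1] by simp


lemma intc01: "continuous_on UNIV f \<Longrightarrow> integrable (lebesgue_on {0..1::real}) (f :: real \<Rightarrow> complex)"
  using continuous_imp_integrable[of 0 1 f] by (auto intro: continuous_on_subset)

lemma intr01: "continuous_on UNIV f \<Longrightarrow> integrable (lebesgue_on {0..1::real}) (f :: real \<Rightarrow> real)"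
  using continuous_imp_integrable_real[of 0 1 f] by (auto intro: continuous_on_subset)

lemma measure01: "measure (lebesgue_on {0..1::real}) {0..1} = 1"
  using int01_const[of 1] by simp

lemma Tg_coef:
  fixes b :: real and n :: int assumes b: "b > 0"
  shows "(\<integral>x. Tg b x * cis (2 * pi * of_int n * x) \<partial>lebesgue_on {0..1}) = complex_of_real (exp (- b * (of_int n)\<^sup>2))"
proof -
  define f where "f m x = complex_of_real (exp (- b * (of_int m)\<^sup>2)) * cis (2 * pi * of_int (m + n) * x)" for m :: int and x :: real
  have eq: "Tg b x * cis (2 * pi * of_int n * x) = (\<Sum>\<^sub>\<infinity>m. f m x)" for x
  proof -
    have "Tg b x * cis (2 * pi * of_int n * x) = (\<Sum>\<^sub>\<infinity>m::int. complex_of_real (exp (- b * (of_int m)\<^sup>2)) * cis (2 * pi * of_int m * x) * cis (2 * pi * of_int n * x))"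
      unfolding Tg_def by (rule infsum_cmult_left'[symmetric])
    also have "\<dots> = (\<Sum>\<^sub>\<infinity>m. f m x)"
      by (rule infsum_cong) (simp add: f_def cis_mult algebra_simps)
    finally show ?thesis .
  qed
  have "(\<integral>x. (\<Sum>\<^sub>\<infinity>m. f m x) \<partial>lebesgue_on {0..1}) = (\<Sum>\<^sub>\<infinity>m. \<integral>x. f m x \<partial>lebesgue_on {0..1})"
  proof (rule integral_infsum(2))
    show "infinite (UNIV :: int set)" by (rule infinite_UNIV_int)
    show "integrable (lebesgue_on {0..1}) (f m)" for m
      unfolding f_def by (intro intc01 continuous_intros)
    show "(\<lambda>m. norm (f m x)) summable_on UNIV" for x
      using gauss_int_summable0[OF b] by (simp add: f_def norm_mult)
    show "(\<lambda>m. \<integral>x. norm (f m x) \<partial>lebesgue_on {0..1}) summable_on UNIV"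
      using gauss_int_summable0[OF b] by (simp add: f_def norm_mult measure01)
  qed
  also have "\<dots> = (\<Sum>\<^sub>\<infinity>m. complex_of_real (exp (- b * (of_int m)\<^sup>2)) * (if m + n = 0 then 1 else 0))"
    by (rule infsum_cong) (simp only: f_def Bochner_Integration.integral_mult_right_zero cis_int_integral)
  also have "\<dots> = complex_of_real (exp (- b * (of_int (- n))\<^sup>2)) * (if - n + n = 0 then 1 else 0)"
    by (rule infsum_single_int) auto
  finally show ?thesis using eq by simp
qed

lemma ind_single:
  "indicator {real_of_int (- k)..<real_of_int (1 - k)} y = (if k = - \<lfloor>y\<rfloor> then 1 else (0::real))"
proof -
  have "y \<in> {real_of_int (- k)..<real_of_int (1 - k)} \<longleftrightarrow> \<lfloor>y\<rfloor> = - k"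
    by (simp add: floor_eq_iff)
  then show ?thesis by (auto simp: indicator_def)
qed

lemma gauss_partition:
  fixes a :: real and n :: int assumes a: "a > 0"
  defines "G \<equiv> \<lambda>y. complex_of_real (exp (- a * y\<^sup>2)) * cis (2 * pi * of_int n * y)"
  shows "(\<Sum>\<^sub>\<infinity>k::int. \<integral>y. indicator {real_of_int (- k)..<real_of_int (1 - k)} y *\<^sub>R G y \<partial>lborel) = (\<integral>y. G y \<partial>lborel)"
proof -
  define f where "f k y = indicator {real_of_int (- k)..<real_of_int (1 - k)} y *\<^sub>R G y" for k :: int and y
  have Gi: "integrable lborel G" unfolding G_def using gauss_ft_integrable[OF a, of "2 * pi * of_int n"]
    by (simp add: mult.assoc)
  have fi: "integrable lborel (f k)" for k unfolding f_def by (intro integrable_mult_indicator Gi) auto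
  have fs: "f k y = (if k = - \<lfloor>y\<rfloor> then G y else 0)" for k y unfolding f_def ind_single by simp
  have pt: "(\<Sum>\<^sub>\<infinity>k. f k y) = G y" for y
    using infsum_single_int[where f="\<lambda>k. f k y" and kz="- \<lfloor>y\<rfloor>"] by (simp add: fs)
  have "(\<integral>y. (\<Sum>\<^sub>\<infinity>k. f k y) \<partial>lborel) = (\<Sum>\<^sub>\<infinity>k. \<integral>y. f k y \<partial>lborel)"
  proof (rule integral_infsum(2))
    show "infinite (UNIV :: int set)" by (rule infinite_UNIV_int)
    show "integrable lborel (f k)" for k by (rule fi)
    show "(\<lambda>k. norm (f k y)) summable_on UNIV" for y
      by (rule summable_single_int[where kz="- \<lfloor>y\<rfloor>"]) (simp add: fs)
    show "(\<lambda>k. \<integral>y. norm (f k y) \<partial>lborel) summable_on UNIV"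
    proof (rule nonneg_bdd_above_summable_on)
      show "0 \<le> (\<integral>y. norm (f k y) \<partial>lborel)" for k by (rule integral_nonneg_AE) auto
      show "bdd_above (sum (\<lambda>k. \<integral>y. norm (f k y) \<partial>lborel) ` {F. F \<subseteq> UNIV \<and> finite F})"
      proof (rule bdd_aboveI2)
        fix F :: "int set" assume "F \<in> {F. F \<subseteq> UNIV \<and> finite F}"
        then have F: "finite F" by simp
        have "(\<Sum>k\<in>F. \<integral>y. norm (f k y) \<partial>lborel) = (\<integral>y. (\<Sum>k\<in>F. norm (f k y)) \<partial>lborel)"
          by (rule Bochner_Integration.integral_sum[symmetric]) (auto intro: fi)
        also have "\<dots> \<le> (\<integral>y. norm (G y) \<partial>lborel)"
        proof (rule integral_mono)
          show "integrable lborel (\<lambda>y. \<Sum>k\<in>F. norm (f k y))" by (intro Bochner_Integration.integrable_sum Bochner_Integration.integrable_norm fi)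
          show "integrable lborel (\<lambda>y. norm (G y))" using Gi by auto
          show "(\<Sum>k\<in>F. norm (f k y)) \<le> norm (G y)" for y
          proof -
            have "(\<Sum>k\<in>F. norm (f k y)) = (\<Sum>k\<in>F. if k = - \<lfloor>y\<rfloor> then norm (G y) else 0)"
              by (rule sum.cong) (auto simp: fs)
            also have "\<dots> = (if - \<lfloor>y\<rfloor> \<in> F then norm (G y) else 0)"
              using F by (simp add: sum.delta')
            also have "\<dots> \<le> norm (G y)" by simp
            finally show ?thesis .
          qed
        qed
        finally show "(\<Sum>k\<in>F. \<integral>y. norm (f k y) \<partial>lborel) \<le> (\<integral>y. norm (G y) \<partial>lborel)" .
      qed
    qed
  qed
  then show ?thesis using pt by (simp add: f_def)
qed


lemma Pg_coef:
  fixes a :: real and n :: int assumes a: "a > 0"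
  shows "(\<integral>x. Pg a x * cis (2 * pi * of_int n * x) \<partial>lebesgue_on {0..1})
    = complex_of_real (sqrt (pi / a) * exp (- (2 * pi * of_int n)\<^sup>2 / (4 * a)))"
proof -
  define G where "G y = complex_of_real (exp (- a * y\<^sup>2)) * cis (2 * pi * of_int n * y)" for y
  define f where "f k x = complex_of_real (exp (- a * (x - of_int k)\<^sup>2)) * cis (2 * pi * of_int n * x)" for k :: int and x :: real
  have fc: "continuous_on UNIV (f k)" for k unfolding f_def by (intro continuous_intros)
  have eq: "Pg a x * cis (2 * pi * of_int n * x) = (\<Sum>\<^sub>\<infinity>k. f k x)" for x
    unfolding Pg_def f_def by (rule infsum_cmult_left'[symmetric])
  have "(\<integral>x. (\<Sum>\<^sub>\<infinity>k. f k x) \<partial>lebesgue_on {0..1}) = (\<Sum>\<^sub>\<infinity>k. \<integral>x. f k x \<partial>lebesgue_on {0..1})"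
  proof (rule integral_infsum(2))
    show "infinite (UNIV :: int set)" by (rule infinite_UNIV_int)
    show "integrable (lebesgue_on {0..1}) (f k)" for k by (rule intc01[OF fc])
    show "(\<lambda>k. norm (f k x)) summable_on UNIV" for x
      using gk_summable[OF a, of x] by (simp add: f_def norm_mult)
    show "(\<lambda>k. \<integral>x. norm (f k x) \<partial>lebesgue_on {0..1}) summable_on UNIV"
    proof (rule summable_on_comparison_test)
      show "(\<lambda>k::int. exp (a * 1\<^sup>2) * exp (- (a/2) * (of_int k)\<^sup>2)) summable_on UNIV"
        by (intro summable_on_cmult_right gauss_int_summable0) (use a in auto)
      show "0 \<le> (\<integral>x. norm (f k x) \<partial>lebesgue_on {0..1})" for k by (rule integral_nonneg_AE) auto
      show "(\<integral>x. norm (f k x) \<partial>lebesgue_on {0..1}) \<le> exp (a * 1\<^sup>2) * exp (- (a/2) * (of_int k)\<^sup>2)" for k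
      proof -
        have "(\<integral>x. norm (f k x) \<partial>lebesgue_on {0..1}) \<le> (\<integral>x. exp (a * 1\<^sup>2) * exp (- (a/2) * (of_int k)\<^sup>2) \<partial>lebesgue_on {0..1::real})"
        proof (rule integral_mono)
          show "integrable (lebesgue_on {0..1}) (\<lambda>x. norm (f k x))" by (intro intr01 continuous_intros fc)
          show "integrable (lebesgue_on {0..1}) (\<lambda>x::real. exp (a * 1\<^sup>2) * exp (- (a/2) * (of_int k)\<^sup>2))" by (intro intr01 continuous_intros)
          show "norm (f k x) \<le> exp (a * 1\<^sup>2) * exp (- (a/2) * (of_int k)\<^sup>2)" if "x \<in> space (lebesgue_on {0..1})" for x
            using that gk_bound[OF a, of x 1 k] by (simp add: f_def norm_mult)
        qed
        then show ?thesis by (simp only: int01_const)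
      qed
    qed
  qed
  also have "\<dots> = (\<Sum>\<^sub>\<infinity>k::int. \<integral>y. indicator {real_of_int (- k)..<real_of_int (1 - k)} y *\<^sub>R G y \<partial>lborel)"
  proof (rule infsum_cong)
    fix k :: int
    have m1: "(\<lambda>x. indicator A x *\<^sub>R f k x) \<in> borel_measurable borel" if "A \<in> sets borel" for A :: "real set"
      using that by (intro borel_measurable_scaleR borel_measurable_indicator borel_measurable_continuous_onI fc)
    have "(\<integral>x. f k x \<partial>lebesgue_on {0..1}) = (\<integral>x. indicator {0..1} x *\<^sub>R f k x \<partial>lborel)"
      by (rule lebesgue_on_lborel) (rule borel_measurable_continuous_onI[OF fc])
    also have "\<dots> = (\<integral>x. indicator {0..<1} x *\<^sub>R f k x \<partial>lborel)"
    proof (rule integral_cong_AE)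
      show "(\<lambda>x. indicator {0..1} x *\<^sub>R f k x) \<in> borel_measurable lborel" using m1[of "{0..1}"] by simp
      show "(\<lambda>x. indicator {0..<1} x *\<^sub>R f k x) \<in> borel_measurable lborel" using m1[of "{0..<1}"] by simp
      show "AE x in lborel. indicator {0..1} x *\<^sub>R f k x = indicator {0..<1} x *\<^sub>R f k x"
        using AE_lborel_singleton[of "1::real"] by eventually_elim (auto simp: indicator_def)
    qed
    also have "\<dots> = \<bar>1\<bar> *\<^sub>R (\<integral>y. indicator {0..<1} (of_int k + 1 * y) *\<^sub>R f k (of_int k + 1 * y) \<partial>lborel)"
      by (rule lborel_integral_real_affine) simp
    also have "\<dots> = (\<integral>y. indicator {real_of_int (- k)..<real_of_int (1 - k)} y *\<^sub>R G y \<partial>lborel)"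
    proof -
      have "indicator {0..<1} (of_int k + 1 * y) *\<^sub>R f k (of_int k + 1 * y) = indicator {real_of_int (- k)..<real_of_int (1 - k)} y *\<^sub>R G y" for y
      proof -
        have i: "indicator {0..<1} (of_int k + 1 * y) = (indicator {real_of_int (- k)..<real_of_int (1 - k)} y :: real)"
          by (auto simp: indicator_def)
        have "f k (of_int k + 1 * y) = G y"
          using cis_int_shift[of n y k] by (simp add: f_def G_def add.commute)
        then show ?thesis using i by simp
      qed
      then show ?thesis by simp
    qed
    finally show "(\<integral>x. f k x \<partial>lebesgue_on {0..1}) = (\<integral>y. indicator {real_of_int (- k)..<real_of_int (1 - k)} y *\<^sub>R G y \<partial>lborel)" .
  qed
  also have "\<dots> = (\<integral>y. G y \<partial>lborel)"
    unfolding G_def by (rule gauss_partition[OF a])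
  also have "\<dots> = complex_of_real (sqrt (pi / a) * exp (- (2 * pi * of_int n)\<^sup>2 / (4 * a)))"
    unfolding G_def by (rule gauss_ft[OF a])
  finally show ?thesis using eq by simp
qed

theorem poisson_gauss:
  fixes b x :: real assumes b: "b > 0"
  shows "Tg b x = complex_of_real (sqrt (pi / b)) * Pg (pi\<^sup>2 / b) x"
proof -
  define a where "a = pi\<^sup>2 / b"
  have a: "a > 0" using b by (simp add: a_def)
  have sa: "sqrt (pi / a) = sqrt (b / pi)" using b by (simp add: a_def power2_eq_square field_simps)
  define H where "H y = Pg a y - complex_of_real (sqrt (pi / a)) * Tg b y" for y
  have Hc: "continuous_on UNIV H" unfolding H_def
    by (intro continuous_intros Pg_cont[OF a] Tg_cont[OF b])
  have "H y = 0" for y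
  proof (rule fourier_unique[of H])
    show "continuous_on UNIV H" by (rule Hc)
    show "H (x + 1) = H x" for x by (simp add: H_def Pg_per Tg_per)
    show "(\<integral>x. H x * cis (2 * pi * of_int n * x) \<partial>lebesgue_on {0..1}) = 0" for n :: int
    proof -
      have "(\<integral>x. H x * cis (2 * pi * of_int n * x) \<partial>lebesgue_on {0..1})
          = (\<integral>x. Pg a x * cis (2 * pi * of_int n * x) \<partial>lebesgue_on {0..1})
            - complex_of_real (sqrt (pi / a)) * (\<integral>x. Tg b x * cis (2 * pi * of_int n * x) \<partial>lebesgue_on {0..1})"
        unfolding H_def left_diff_distrib mult.assoc
        by (subst Bochner_Integration.integral_diff)
           (auto intro!: intc01 continuous_intros Pg_cont[OF a] Tg_cont[OF b])
      also have "\<dots> = 0"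
      proof -
        have "(2 * pi * of_int n)\<^sup>2 / (4 * a) = b * (of_int n)\<^sup>2"
          using b by (simp add: a_def power2_eq_square field_simps)
        then show ?thesis by (simp add: Pg_coef[OF a] Tg_coef[OF b])
      qed
      finally show ?thesis .
    qed
  qed
  then have "Pg a x = complex_of_real (sqrt (b / pi)) * Tg b x" by (simp add: H_def sa)
  then have "complex_of_real (sqrt (pi / b)) * Pg a x = complex_of_real (sqrt (pi / b) * sqrt (b / pi)) * Tg b x"
    by simp
  also have "sqrt (pi / b) * sqrt (b / pi) = 1" using b by (simp add: real_sqrt_mult[symmetric])
  finally show ?thesis by (simp add: a_def)
qed


lemma summable_prod_real:
  fixes f g :: "'a \<Rightarrow> real"
  assumes "\<And>s. f s \<ge> 0" "\<And>t. g t \<ge> 0" "f summable_on A" "g summable_on B"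
  shows "(\<lambda>(s,t). f s * g t) summable_on (A \<times> B)"
proof -
  have "(\<lambda>(s,t). f s * g t) summable_on (Sigma A (\<lambda>_. B))"
  proof (rule summable_on_SigmaI[where g="\<lambda>s. f s * infsum g B"])
    show "((\<lambda>t. case (s, t) of (s, t) \<Rightarrow> f s * g t) has_sum f s * infsum g B) B" for s
      using has_sum_cmult_right[OF has_sum_infsum[OF assms(4)], of "f s"] by simp
    show "(\<lambda>s. f s * infsum g B) summable_on A" by (rule summable_on_cmult_left[OF assms(3)])
  qed (use assms in auto)
  then show ?thesis by simp
qed

lemma infsum_prod_real:
  fixes f g :: "'a \<Rightarrow> real"
  assumes "\<And>s. f s \<ge> 0" "\<And>t. g t \<ge> 0" "f summable_on A" "g summable_on B"
  shows "infsum f A * infsum g B = (\<Sum>\<^sub>\<infinity>(s,t)\<in>A \<times> B. f s * g t)"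
proof -
  have "(\<Sum>\<^sub>\<infinity>(s,t)\<in>A \<times> B. f s * g t) = (\<Sum>\<^sub>\<infinity>s\<in>A. \<Sum>\<^sub>\<infinity>t\<in>B. f s * g t)"
    using infsum_Sigma_banach[of "\<lambda>(s,t). f s * g t" A "\<lambda>_. B"] summable_prod_real[OF assms] by simp
  also have "\<dots> = (\<Sum>\<^sub>\<infinity>s\<in>A. f s * infsum g B)"
    by (simp add: infsum_cmult_right')
  also have "\<dots> = infsum f A * infsum g B" by (simp add: infsum_cmult_left')
  finally show ?thesis by simp
qed

lemma gauss_pos: "v > 0 \<Longrightarrow> gauss v x > 0"
  by (simp add: gauss_def)

lemma gauss_prod_eq:
  fixes v x y q :: real assumes v: "v > 0"
  shows "gauss v (q - x) * gauss v (q - y) = exp (- (x - y)\<^sup>2 / (4 * v)) / (2 * pi * v) * exp (- (1 / v) * (q - (x + y) / 2)\<^sup>2)"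
proof -
  have "sqrt (2 * pi * v) * sqrt (2 * pi * v) = 2 * pi * v" using v by simp
  moreover have "- (q - x)\<^sup>2 / (2 * v) + - (q - y)\<^sup>2 / (2 * v) = - (x - y)\<^sup>2 / (4 * v) + - (1 / v) * (q - (x + y) / 2)\<^sup>2"
    using v by (simp add: field_simps power2_eq_square)
  ultimately show ?thesis
    by (simp add: gauss_def exp_add[symmetric] divide_simps)
qed

lemma gauss_prod_integrable:
  fixes v x y :: real assumes v: "v > 0"
  shows "integrable lborel (\<lambda>q. gauss v (q - x) * gauss v (q - y))"
proof -
  have e: "(\<lambda>q. exp (- (1 / v) * (q - (x + y) / 2)\<^sup>2)) = (\<lambda>q. exp (- (1 / v) * (- (x + y) / 2 + 1 * q)\<^sup>2))"
  proof -
    have "q - (x + y) / 2 = - (x + y) / 2 + 1 * q" for q by linarith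
    then show ?thesis by (simp only:)
  qed
  have "integrable lborel (\<lambda>q. exp (- (1 / v) * q\<^sup>2))" using gauss_integrable[of "1 / v"] v by simp
  then have "integrable lborel (\<lambda>q. exp (- (1 / v) * (q - (x + y) / 2)\<^sup>2))"
    unfolding e by (rule lborel_integrable_real_affine) simp
  then show ?thesis unfolding gauss_prod_eq[OF v] by (rule integrable_mult_right)
qed

lemma gauss_prod_integral:
  fixes v x y :: real assumes v: "v > 0"
  shows "(\<integral>q. gauss v (q - x) * gauss v (q - y) \<partial>lborel) = gauss (2 * v) (x - y)"
proof -
  have "(\<integral>q. exp (- (1 / v) * (q - (x + y) / 2)\<^sup>2) \<partial>lborel)
      = \<bar>1\<bar> *\<^sub>R (\<integral>q. exp (- (1 / v) * ((x + y) / 2 + 1 * q - (x + y) / 2)\<^sup>2) \<partial>lborel)"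
    by (rule lborel_integral_real_affine) simp
  also have "\<dots> = sqrt (pi / (1 / v))" using gauss_integral[of "1 / v"] v by simp
  finally have I: "(\<integral>q. exp (- (1 / v) * (q - (x + y) / 2)\<^sup>2) \<partial>lborel) = sqrt (pi * v)" by simp
  have "sqrt (pi * v) * sqrt (2 * pi * (2 * v)) = 2 * pi * v"
  proof -
    have "sqrt (pi * v) * sqrt (2 * pi * (2 * v)) = sqrt ((2 * pi * v)\<^sup>2)"
      by (simp add: real_sqrt_mult[symmetric] power2_eq_square algebra_simps)
    also have "\<dots> = 2 * pi * v" using v by simp
    finally show ?thesis .
  qed
  then have c: "sqrt (pi * v) / (2 * pi * v) = 1 / sqrt (2 * pi * (2 * v))"
    using v by (simp add: field_simps)
  have "(\<integral>q. gauss v (q - x) * gauss v (q - y) \<partial>lborel) = exp (- (x - y)\<^sup>2 / (4 * v)) / (2 * pi * v) * sqrt (pi * v)"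
    unfolding gauss_prod_eq[OF v] integral_mult_right_zero I ..
  also have "\<dots> = exp (- (x - y)\<^sup>2 / (4 * v)) * (sqrt (pi * v) / (2 * pi * v))" by simp
  also have "\<dots> = exp (- (x - y)\<^sup>2 / (2 * (2 * v))) / sqrt (2 * pi * (2 * v))" unfolding c by simp
  finally show ?thesis by (simp add: gauss_def)
qed


lemma gauss_le: "v > 0 \<Longrightarrow> gauss v x \<le> 1 / sqrt (2 * pi * v)"
  by (simp add: gauss_def divide_right_mono)

lemma comb_w_summable:
  fixes \<mu> \<Gamma> \<alpha> :: real assumes "\<mu> > 0" "\<Gamma> > 0"
  shows "(\<lambda>s::int. exp (- ((of_int s + \<alpha>) * \<Gamma>)\<^sup>2 / (2 * \<mu>))) summable_on UNIV"
proof -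
  have "(\<lambda>s::int. exp (- (\<Gamma>\<^sup>2 / (2 * \<mu>)) * (of_int s + \<alpha>)\<^sup>2)) summable_on UNIV"
    by (rule gauss_int_summable) (use assms in simp)
  moreover have "(\<lambda>s::int. exp (- (\<Gamma>\<^sup>2 / (2 * \<mu>)) * (of_int s + \<alpha>)\<^sup>2)) = (\<lambda>s. exp (- ((of_int s + \<alpha>) * \<Gamma>)\<^sup>2 / (2 * \<mu>)))"
    by (rule ext) (simp add: power_mult_distrib mult.commute)
  ultimately show ?thesis by simp
qed

lemma comb_term_summable:
  fixes \<mu> \<Gamma> \<alpha> v q :: real assumes "\<mu> > 0" "\<Gamma> > 0" "v > 0"
  shows "(\<lambda>s::int. exp (- ((of_int s + \<alpha>) * \<Gamma>)\<^sup>2 / (2 * \<mu>)) * gauss v (q - (of_int s + \<alpha>) * \<Gamma>)) summable_on UNIV"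
proof (rule summable_on_comparison_test)
  show "(\<lambda>s::int. exp (- ((of_int s + \<alpha>) * \<Gamma>)\<^sup>2 / (2 * \<mu>)) * (1 / sqrt (2 * pi * v))) summable_on UNIV"
    by (intro summable_on_cmult_left comb_w_summable) (use assms in auto)
  show "exp (- ((of_int s + \<alpha>) * \<Gamma>)\<^sup>2 / (2 * \<mu>)) * gauss v (q - (of_int s + \<alpha>) * \<Gamma>)
      \<le> exp (- ((of_int s + \<alpha>) * \<Gamma>)\<^sup>2 / (2 * \<mu>)) * (1 / sqrt (2 * pi * v))" for s
    using gauss_le[OF assms(3)] by (intro mult_left_mono) auto
  show "0 \<le> exp (- ((of_int s + \<alpha>) * \<Gamma>)\<^sup>2 / (2 * \<mu>)) * gauss v (q - (of_int s + \<alpha>) * \<Gamma>)" for s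
    using gauss_pos[OF assms(3)] by (simp add: less_imp_le)
qed

lemma infinite_int_int: "infinite (UNIV :: (int \<times> int) set)"
  by (simp add: finite_prod)

lemma comb_prod_integral:
  fixes \<mu> \<Gamma> v \<alpha> \<beta> :: real assumes mu: "\<mu> > 0" and G: "\<Gamma> > 0" and v: "v > 0"
  defines "w \<equiv> \<lambda>c s. exp (- ((of_int s + c) * \<Gamma>)\<^sup>2 / (2 * \<mu>))"
  shows "(\<integral>q. comb_conv_gauss \<mu> \<Gamma> \<alpha> v q * comb_conv_gauss \<mu> \<Gamma> \<beta> v q \<partial>lborel)
       = (\<Sum>\<^sub>\<infinity>(s,t)\<in>UNIV. w \<alpha> s * w \<beta> t * gauss (2 * v) ((of_int s + \<alpha>) * \<Gamma> - (of_int t + \<beta>) * \<Gamma>))"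
proof -
  define h where "h st q = (case st of (s, t) \<Rightarrow> w \<alpha> s * gauss v (q - (of_int s + \<alpha>) * \<Gamma>) * (w \<beta> t * gauss v (q - (of_int t + \<beta>) * \<Gamma>)))"
    for st :: "int \<times> int" and q
  have wpos: "w c s > 0" for c s by (simp add: w_def)
  have hnn: "h st q \<ge> 0" for st q
    using wpos gauss_pos[OF v] by (auto simp: h_def split: prod.splits intro!: mult_nonneg_nonneg less_imp_le)
  have ws: "w c summable_on UNIV" for c unfolding w_def by (rule comb_w_summable[OF mu G])
  have pt: "comb_conv_gauss \<mu> \<Gamma> \<alpha> v q * comb_conv_gauss \<mu> \<Gamma> \<beta> v q = (\<Sum>\<^sub>\<infinity>st. h st q)" for q
    unfolding comb_conv_gauss_def h_def w_def
    by (rule infsum_prod_real[of _ _ UNIV UNIV, simplified])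
       (use gauss_pos[OF v] comb_term_summable[OF mu G v] in \<open>auto intro!: mult_nonneg_nonneg less_imp_le\<close>)
  have hs: "(\<lambda>st. h st q) summable_on UNIV" for q
  proof -
    define A where "A s = w \<alpha> s * gauss v (q - (of_int s + \<alpha>) * \<Gamma>)" for s :: int
    define B where "B t = w \<beta> t * gauss v (q - (of_int t + \<beta>) * \<Gamma>)" for t :: int
    have "(\<lambda>(s,t). A s * B t) summable_on (UNIV \<times> UNIV)"
    proof (rule summable_prod_real)
      show "0 \<le> A s" for s using wpos gauss_pos[OF v] by (simp add: A_def less_imp_le)
      show "0 \<le> B s" for s using wpos gauss_pos[OF v] by (simp add: B_def less_imp_le)
      show "A summable_on UNIV" unfolding A_def w_def by (rule comb_term_summable[OF mu G v])
      show "B summable_on UNIV" unfolding B_def w_def by (rule comb_term_summable[OF mu G v])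
    qed
    moreover have "(\<lambda>(s,t). A s * B t) = (\<lambda>st. h st q)" by (auto simp: h_def A_def B_def)
    ultimately show ?thesis by simp
  qed
  have hi: "(\<integral>q. h st q \<partial>lborel) = (case st of (s, t) \<Rightarrow> w \<alpha> s * w \<beta> t * gauss (2 * v) ((of_int s + \<alpha>) * \<Gamma> - (of_int t + \<beta>) * \<Gamma>))"
    and hint: "integrable lborel (h st)" for st
  proof -
    obtain s t where st: "st = (s, t)" by (cases st)
    have e: "h st q = (w \<alpha> s * w \<beta> t) * (gauss v (q - (of_int s + \<alpha>) * \<Gamma>) * gauss v (q - (of_int t + \<beta>) * \<Gamma>))" for q
      by (simp add: h_def st mult_ac)
    show "integrable lborel (h st)" unfolding e by (intro integrable_mult_right gauss_prod_integrable[OF v])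
    show "(\<integral>q. h st q \<partial>lborel) = (case st of (s, t) \<Rightarrow> w \<alpha> s * w \<beta> t * gauss (2 * v) ((of_int s + \<alpha>) * \<Gamma> - (of_int t + \<beta>) * \<Gamma>))"
      unfolding e integral_mult_right_zero gauss_prod_integral[OF v] by (simp add: st)
  qed
  have "(\<integral>q. (\<Sum>\<^sub>\<infinity>st. h st q) \<partial>lborel) = (\<Sum>\<^sub>\<infinity>st. \<integral>q. h st q \<partial>lborel)"
  proof (rule integral_infsum(2))
    show "infinite (UNIV :: (int \<times> int) set)" by (rule infinite_int_int)
    show "integrable lborel (h st)" for st by (rule hint)
    show "(\<lambda>st. norm (h st q)) summable_on UNIV" for q using hs[of q] hnn by simp
    show "(\<lambda>st. \<integral>q. norm (h st q) \<partial>lborel) summable_on UNIV"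
    proof (rule summable_on_comparison_test)
      show "(\<lambda>st. (case st of (s, t) \<Rightarrow> w \<alpha> s * w \<beta> t) * (1 / sqrt (2 * pi * (2 * v)))) summable_on UNIV"
        using summable_prod_real[of "w \<alpha>" "w \<beta>" UNIV UNIV] wpos ws
        by (intro summable_on_cmult_left) (auto simp: less_imp_le)
      show "(\<integral>q. norm (h st q) \<partial>lborel) \<le> (case st of (s, t) \<Rightarrow> w \<alpha> s * w \<beta> t) * (1 / sqrt (2 * pi * (2 * v)))" for st
      proof -
        have "(\<integral>q. norm (h st q) \<partial>lborel) = (\<integral>q. h st q \<partial>lborel)" using hnn by simp
        also have "\<dots> \<le> (case st of (s, t) \<Rightarrow> w \<alpha> s * w \<beta> t) * (1 / sqrt (2 * pi * (2 * v)))"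
        proof -
          obtain s t where st: "st = (s, t)" by (cases st)
          have "w \<alpha> s * w \<beta> t * gauss (2 * v) ((of_int s + \<alpha>) * \<Gamma> - (of_int t + \<beta>) * \<Gamma>) \<le> w \<alpha> s * w \<beta> t * (1 / sqrt (2 * pi * (2 * v)))"
            by (rule mult_left_mono) (use gauss_le[of "2 * v"] v wpos in \<open>auto intro: less_imp_le\<close>)
          then show ?thesis unfolding hi by (simp add: st)
        qed
        finally show ?thesis .
      qed
      show "0 \<le> (\<integral>q. norm (h st q) \<partial>lborel)" for st by (rule integral_nonneg_AE) auto
    qed
  qed
  then show ?thesis unfolding pt[symmetric] hi by (simp add: case_prod_unfold)
qed


lemma theta2_reindex:
  "riemann_theta 2 a b z \<tau> = (\<Sum>\<^sub>\<infinity>p\<in>(UNIV::(int\<times>int) set).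
     (\<lambda>s. exp (pi * \<i> * (\<Sum>k<2. \<Sum>l<2. (of_int (s k) + of_rat (a k)) * \<tau> k l * (of_int (s l) + of_rat (a l)))
             + 2 * pi * \<i> * (\<Sum>k<2. (z k + of_rat (b k)) * (of_int (s k) + of_rat (a k)))))
     (\<lambda>i. if i = 0 then fst p else if i = 1 then snd p else 0))"
proof -
  define e where "e p = (\<lambda>i::nat. if i = 0 then fst p else if i = 1 then snd p else (0::int))" for p :: "int \<times> int"
  have bij: "bij_betw e UNIV {s::nat \<Rightarrow> int. \<forall>i\<ge>2. s i = 0}"
  proof (rule bij_betwI[where g="\<lambda>s. (s 0, s 1)"])
    show "e \<in> UNIV \<rightarrow> {s::nat \<Rightarrow> int. \<forall>i\<ge>2. s i = 0}" by (auto simp: e_def)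
    show "(\<lambda>s. (s 0, s 1)) \<in> {s::nat \<Rightarrow> int. \<forall>i\<ge>2. s i = 0} \<rightarrow> UNIV" by simp
    show "(\<lambda>s. (s 0, s 1)) (e p) = p" for p by (simp add: e_def)
    show "e ((\<lambda>s. (s 0, s 1)) s) = s" if "s \<in> {s::nat \<Rightarrow> int. \<forall>i\<ge>2. s i = 0}" for s
    proof
      fix i show "e (s 0, s 1) i = s i" using that by (cases "i = 0"; cases "i = 1") (auto simp: e_def)
    qed
  qed
  show ?thesis unfolding riemann_theta_def
    using infsum_reindex_bij_betw[OF bij, symmetric] by (simp add: e_def)
qed

lemma complex_of_real_of_rat [simp]: "complex_of_real (of_rat r) = of_rat r"
  by (cases r) (simp add: of_rat_rat)

lemma theta_term:
  fixes ra rb :: real and A B :: rat and n m :: int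
  defines "\<tau> \<equiv> (\<lambda>k l. if k = 0 \<and> l = 0 then \<i> * complex_of_real ra
                        else if k = 1 \<and> l = 1 then \<i> * complex_of_real rb
                        else - 1/2)"
  defines "s \<equiv> (\<lambda>i::nat. if i = 0 then n else if i = 1 then m else 0)"
  defines "a \<equiv> (\<lambda>k::nat. if k = 0 then A else 0)" and "b \<equiv> (\<lambda>k::nat. if k = 1 then B else 0)"
  shows "exp (pi * \<i> * (\<Sum>k<2. \<Sum>l<2. (of_int (s k) + of_rat (a k)) * \<tau> k l * (of_int (s l) + of_rat (a l)))
             + 2 * pi * \<i> * (\<Sum>k<2. ((\<lambda>_. 0) k + of_rat (b k)) * (of_int (s k) + of_rat (a k))))
    = complex_of_real (exp (- pi * ra * (of_int n + of_rat A)\<^sup>2)) *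
      (complex_of_real (exp (- (pi * rb) * (of_int m)\<^sup>2)) * cis (2 * pi * of_int m * (of_rat B - (of_int n + of_rat A) / 2)))"
proof -
  define N where "N = real_of_int n + of_rat A"
  define M where "M = real_of_int m"
  have "(\<Sum>k<2. \<Sum>l<2. (of_int (s k) + of_rat (a k)) * \<tau> k l * (of_int (s l) + of_rat (a l)))
      = complex_of_real N * (\<i> * complex_of_real ra) * complex_of_real N - complex_of_real N * complex_of_real M
        + complex_of_real M * (\<i> * complex_of_real rb) * complex_of_real M"
    by (simp add: numeral_2_eq_2 \<tau>_def s_def a_def N_def M_def algebra_simps)
  moreover have "(\<Sum>k<2. ((\<lambda>_. 0) k + of_rat (b k)) * (of_int (s k) + of_rat (a k))) = complex_of_real (of_rat B) * complex_of_real M"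
    by (simp add: numeral_2_eq_2 s_def a_def b_def M_def)
  ultimately have "pi * \<i> * (\<Sum>k<2. \<Sum>l<2. (of_int (s k) + of_rat (a k)) * \<tau> k l * (of_int (s l) + of_rat (a l)))
             + 2 * pi * \<i> * (\<Sum>k<2. ((\<lambda>_. 0) k + of_rat (b k)) * (of_int (s k) + of_rat (a k)))
      = complex_of_real (- pi * ra * N\<^sup>2 + - (pi * rb) * M\<^sup>2) + \<i> * complex_of_real (2 * pi * M * (of_rat B - N / 2))"
    by (simp add: complex_eq_iff power2_eq_square algebra_simps)
  then have "exp (pi * \<i> * (\<Sum>k<2. \<Sum>l<2. (of_int (s k) + of_rat (a k)) * \<tau> k l * (of_int (s l) + of_rat (a l)))
             + 2 * pi * \<i> * (\<Sum>k<2. ((\<lambda>_. 0) k + of_rat (b k)) * (of_int (s k) + of_rat (a k))))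
      = exp (complex_of_real (- pi * ra * N\<^sup>2 + - (pi * rb) * M\<^sup>2)) * exp (\<i> * complex_of_real (2 * pi * M * (of_rat B - N / 2)))"
    by (simp only: exp_add)
  also have "\<dots> = complex_of_real (exp (- pi * ra * N\<^sup>2) * exp (- (pi * rb) * M\<^sup>2)) * cis (2 * pi * M * (of_rat B - N / 2))"
    by (simp only: exp_of_real cis_conv_exp exp_add)
  finally show ?thesis by (simp add: N_def M_def mult_ac)
qed


lemma infsum_of_real_complex:
  fixes f :: "'a \<Rightarrow> real"
  assumes "f summable_on A"
  shows "(\<Sum>\<^sub>\<infinity>x\<in>A. complex_of_real (f x)) = complex_of_real (infsum f A)"
  by (rule infsumI) (rule has_sum_of_real[OF has_sum_infsum[OF assms]])

lemma Pg_real: "a > 0 \<Longrightarrow> Pg a x = complex_of_real (\<Sum>\<^sub>\<infinity>k::int. exp (- a * (x - of_int k)\<^sup>2))"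
  unfolding Pg_def by (rule infsum_of_real_complex[OF gk_summable])

lemma gauss_int_summable':
  fixes b c :: real assumes "b > 0"
  shows "(\<lambda>k::int. exp (- b * (real_of_int k + c)\<^sup>2)) summable_on UNIV"
  using gauss_int_summable[OF assms] .

lemma theta_poisson:
  fixes p0 p3 A B :: real
  assumes p0: "p0 > 0" and p3: "p3 > 0"
  defines "E \<equiv> \<lambda>n k. exp (- (pi * p0) * (real_of_int n + A)\<^sup>2) * exp (- (pi / p3) * (B - (real_of_int n + A) / 2 - real_of_int k)\<^sup>2)"
  assumes summ: "(\<lambda>(n,k). E n k) summable_on UNIV"
  shows "(\<Sum>\<^sub>\<infinity>(n,m)\<in>(UNIV::(int\<times>int) set). complex_of_real (exp (- (pi * p0) * (real_of_int n + A)\<^sup>2)) *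
            (complex_of_real (exp (- (pi * p3) * (real_of_int m)\<^sup>2)) * cis (2 * pi * real_of_int m * (B - (real_of_int n + A) / 2))))
       = complex_of_real (sqrt (1 / p3) * (\<Sum>\<^sub>\<infinity>(n,k)\<in>(UNIV::(int\<times>int) set). E n k))"
proof -
  define e where "e n = exp (- (pi * p0) * (real_of_int n + A)\<^sup>2)" for n :: int
  define g where "g m = exp (- (pi * p3) * (real_of_int m)\<^sup>2)" for m :: int
  define x where "x n = B - (real_of_int n + A) / 2" for n :: int
  define F where "F p = (case p of (n, m) \<Rightarrow> complex_of_real (e n) * (complex_of_real (g m) * cis (2 * pi * real_of_int m * x n)))" for p :: "int \<times> int"
  have es: "e summable_on UNIV" unfolding e_def by (rule gauss_int_summable) (use p0 in simp)
  have gs: "g summable_on UNIV" unfolding g_def using gauss_int_summable[of "pi * p3" 0] p3 by simp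
  have Fs: "F summable_on (UNIV \<times> UNIV)"
  proof (rule abs_summable_summable)
    have "(\<lambda>(n,m). e n * g m) summable_on (UNIV \<times> UNIV)"
      by (rule summable_prod_real[OF _ _ es gs]) (auto simp: e_def g_def)
    moreover have "(\<lambda>p. norm (F p)) = (\<lambda>(n,m). e n * g m)"
      by (auto simp: F_def norm_mult e_def g_def)
    ultimately show "(\<lambda>p. norm (F p)) summable_on (UNIV \<times> UNIV)" by simp
  qed
  have inner: "(\<Sum>\<^sub>\<infinity>m. F (n, m)) = complex_of_real (sqrt (1 / p3) * (\<Sum>\<^sub>\<infinity>k. E n k))" for n
  proof -
    have "(\<Sum>\<^sub>\<infinity>m. F (n, m)) = complex_of_real (e n) * Tg (pi * p3) (x n)"
      unfolding F_def Tg_def g_def by (simp add: infsum_cmult_right')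
    also have "\<dots> = complex_of_real (e n) * (complex_of_real (sqrt (pi / (pi * p3))) * Pg (pi\<^sup>2 / (pi * p3)) (x n))"
      using poisson_gauss[of "pi * p3" "x n"] p3 by simp
    also have "pi\<^sup>2 / (pi * p3) = pi / p3" by (simp add: power2_eq_square)
    also have "pi / (pi * p3) = 1 / p3" by simp
    also have "Pg (pi / p3) (x n) = complex_of_real (\<Sum>\<^sub>\<infinity>k::int. exp (- (pi / p3) * (x n - of_int k)\<^sup>2))"
      by (rule Pg_real) (use p3 in simp)
    also have "complex_of_real (e n) * (complex_of_real (sqrt (1 / p3)) * complex_of_real (\<Sum>\<^sub>\<infinity>k::int. exp (- (pi / p3) * (x n - of_int k)\<^sup>2)))
        = complex_of_real (sqrt (1 / p3) * (e n * (\<Sum>\<^sub>\<infinity>k::int. exp (- (pi / p3) * (x n - of_int k)\<^sup>2))))"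
      by simp
    also have "e n * (\<Sum>\<^sub>\<infinity>k::int. exp (- (pi / p3) * (x n - of_int k)\<^sup>2)) = (\<Sum>\<^sub>\<infinity>k. E n k)"
      unfolding E_def e_def x_def by (simp add: infsum_cmult_right')
    finally show ?thesis .
  qed
  have Es: "(\<lambda>k. E n k) summable_on UNIV" for n
    unfolding E_def by (intro summable_on_cmult_right gk_summable) (use p3 in simp)
  have Rs: "(\<lambda>n. \<Sum>\<^sub>\<infinity>k. E n k) summable_on UNIV"
    using summable_on_SigmaD[of "\<lambda>(n,k). E n k" UNIV "\<lambda>_. UNIV"] summ Es by simp
  have "(\<Sum>\<^sub>\<infinity>p\<in>UNIV \<times> UNIV. F p) = (\<Sum>\<^sub>\<infinity>n. \<Sum>\<^sub>\<infinity>m. F (n, m))"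
    using infsum_Sigma_banach[of F UNIV "\<lambda>_. UNIV"] Fs by simp
  also have "\<dots> = (\<Sum>\<^sub>\<infinity>n. complex_of_real (sqrt (1 / p3) * (\<Sum>\<^sub>\<infinity>k. E n k)))"
    using inner by simp
  also have "\<dots> = complex_of_real (\<Sum>\<^sub>\<infinity>n. sqrt (1 / p3) * (\<Sum>\<^sub>\<infinity>k. E n k))"
    by (rule infsum_of_real_complex) (rule summable_on_cmult_right[OF Rs])
  also have "(\<Sum>\<^sub>\<infinity>n. sqrt (1 / p3) * (\<Sum>\<^sub>\<infinity>k. E n k)) = sqrt (1 / p3) * (\<Sum>\<^sub>\<infinity>n. \<Sum>\<^sub>\<infinity>k. E n k)"
    by (rule infsum_cmult_right')
  also have "(\<Sum>\<^sub>\<infinity>n. \<Sum>\<^sub>\<infinity>k. E n k) = (\<Sum>\<^sub>\<infinity>(n,k)\<in>UNIV. E n k)"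
    using infsum_Sigma_banach[of "\<lambda>(n,k). E n k" UNIV "\<lambda>_. UNIV"] summ by simp
  finally show ?thesis by (simp add: F_def e_def g_def x_def case_prod_unfold)
qed


lemma exponent_identity:
  fixes sq sp \<Gamma> \<alpha> \<beta> :: real and s t :: int
  assumes sq: "sq > 0" and sp: "sp > 0" and G: "\<Gamma> > 0" and L: "1 - 4 * sq * sp > 0"
  defines "\<Lambda> \<equiv> 1 - 4 * sq * sp"
  defines "X \<equiv> (of_int s + \<alpha>) * \<Gamma>" and "Y \<equiv> (of_int t + \<beta>) * \<Gamma>"
  shows "- (pi * (sp * \<Gamma>\<^sup>2 / (2 * pi * \<Lambda>))) * (real_of_int (s + t) + (\<alpha> + \<beta>))\<^sup>2
         + - (pi / (2 * pi * sq * \<Lambda> / \<Gamma>\<^sup>2)) * (\<beta> - (real_of_int (s + t) + (\<alpha> + \<beta>)) / 2 - real_of_int (- t))\<^sup>2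
       = - X\<^sup>2 / (2 * (\<Lambda> / (2 * sp))) + - Y\<^sup>2 / (2 * (\<Lambda> / (2 * sp))) + - (X - Y)\<^sup>2 / (2 * (2 * (2 * sq)))"
proof -
  have L0: "\<Lambda> > 0" using L by (simp add: \<Lambda>_def)
  have pi0: "pi > 0" by simp
  have e1: "real_of_int (s + t) + (\<alpha> + \<beta>) = (X + Y) / \<Gamma>" using G by (simp add: X_def Y_def field_simps)
  have e2: "\<beta> - (real_of_int (s + t) + (\<alpha> + \<beta>)) / 2 - real_of_int (- t) = (Y - X) / (2 * \<Gamma>)"
    using G by (simp add: X_def Y_def field_simps)
  have "- (pi * (sp * \<Gamma>\<^sup>2 / (2 * pi * \<Lambda>))) * ((X + Y) / \<Gamma>)\<^sup>2 + - (pi / (2 * pi * sq * \<Lambda> / \<Gamma>\<^sup>2)) * ((Y - X) / (2 * \<Gamma>))\<^sup>2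
      = - sp * (X + Y)\<^sup>2 / (2 * \<Lambda>) - (X - Y)\<^sup>2 / (8 * sq * \<Lambda>)"
    using G L0 sq pi0 by (simp add: field_simps power2_eq_square)
  also have "\<dots> = - X\<^sup>2 / (2 * (\<Lambda> / (2 * sp))) + - Y\<^sup>2 / (2 * (\<Lambda> / (2 * sp))) + - (X - Y)\<^sup>2 / (2 * (2 * (2 * sq)))"
  proof -
    have "(4 * sq * sp + \<Lambda>) = 1" by (simp add: \<Lambda>_def)
    then show ?thesis using L0 sq sp
      by (simp add: field_simps power2_eq_square) (simp add: algebra_simps \<Lambda>_def)
  qed
  finally have r: "- (pi * (sp * \<Gamma>\<^sup>2 / (2 * pi * \<Lambda>))) * ((X + Y) / \<Gamma>)\<^sup>2 + - (pi / (2 * pi * sq * \<Lambda> / \<Gamma>\<^sup>2)) * ((Y - X) / (2 * \<Gamma>))\<^sup>2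
      = - X\<^sup>2 / (2 * (\<Lambda> / (2 * sp))) + - Y\<^sup>2 / (2 * (\<Lambda> / (2 * sp))) + - (X - Y)\<^sup>2 / (2 * (2 * (2 * sq)))" .
  show ?thesis by (subst e2, subst e1, rule r)
qed


lemma main_identity:
  fixes sq sp \<Gamma> \<alpha> \<beta> :: real
  assumes sq: "0 < sq" "sq < 1/2" and sp: "0 < sp" "sp < 1/2" and G: "\<Gamma> > 0"
  defines "\<Lambda> \<equiv> 1 - 4 * sq * sp"
  defines "p0 \<equiv> sp * \<Gamma>\<^sup>2 / (2 * pi * \<Lambda>)" and "p3 \<equiv> 2 * pi * sq * \<Lambda> / \<Gamma>\<^sup>2"
  shows "(\<Sum>\<^sub>\<infinity>(n,m)\<in>(UNIV::(int\<times>int) set). complex_of_real (exp (- (pi * p0) * (real_of_int n + (\<alpha> + \<beta>))\<^sup>2)) *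
            (complex_of_real (exp (- (pi * p3) * (real_of_int m)\<^sup>2)) * cis (2 * pi * real_of_int m * (\<beta> - (real_of_int n + (\<alpha> + \<beta>)) / 2))))
       = complex_of_real (2 * \<Gamma> / sqrt \<Lambda> * (\<integral>q. comb_conv_gauss (\<Lambda> / (2 * sp)) \<Gamma> \<alpha> (2 * sq) q * comb_conv_gauss (\<Lambda> / (2 * sp)) \<Gamma> \<beta> (2 * sq) q \<partial>lborel))"
proof -
  have "sq * sp < (1/2) * (1/2)" using sq sp by (intro mult_strict_mono) auto
  then have L: "\<Lambda> > 0" by (simp add: \<Lambda>_def)
  have L': "1 - 4 * sq * sp > 0" using L by (simp add: \<Lambda>_def)
  have p0: "p0 > 0" using sp G L by (simp add: p0_def)
  have p3: "p3 > 0" using sq G L by (simp add: p3_def)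
  define \<mu> where "\<mu> = \<Lambda> / (2 * sp)"
  have mu: "\<mu> > 0" using L sp by (simp add: \<mu>_def)
  define w where "w c s = exp (- ((of_int s + c) * \<Gamma>)\<^sup>2 / (2 * \<mu>))" for c :: real and s :: int
  define C where "C = sqrt (2 * pi * (2 * (2 * sq)))"
  have C0: "C > 0" using sq by (simp add: C_def)
  define W where "W p = (case p of (s, t) \<Rightarrow> w \<alpha> s * w \<beta> t * gauss (2 * (2 * sq)) ((of_int s + \<alpha>) * \<Gamma> - (of_int t + \<beta>) * \<Gamma>))" for p :: "int \<times> int"
  define E where "E n k = exp (- (pi * p0) * (real_of_int n + (\<alpha> + \<beta>))\<^sup>2) * exp (- (pi / p3) * (\<beta> - (real_of_int n + (\<alpha> + \<beta>)) / 2 - real_of_int k)\<^sup>2)" for n k :: int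
  define \<phi> where "\<phi> p = (case p of (s, t) \<Rightarrow> (s + t, - t))" for p :: "int \<times> int"
  have bij: "bij_betw \<phi> UNIV UNIV"
    by (rule bij_betwI[where g="\<lambda>(n, k). (n + k, - k)"]) (auto simp: \<phi>_def split: prod.splits)
  have EW: "(\<lambda>(n, k). E n k) (\<phi> p) = C * W p" for p
  proof -
    obtain s t where p: "p = (s, t)" by (cases p)
    have "E (s + t) (- t) = exp (- ((of_int s + \<alpha>) * \<Gamma>)\<^sup>2 / (2 * \<mu>) + - ((of_int t + \<beta>) * \<Gamma>)\<^sup>2 / (2 * \<mu>)
        + - ((of_int s + \<alpha>) * \<Gamma> - (of_int t + \<beta>) * \<Gamma>)\<^sup>2 / (2 * (2 * (2 * sq))))"
      unfolding E_def exp_add[symmetric] p0_def p3_def \<mu>_def \<Lambda>_def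
      by (subst exponent_identity[OF sq(1) sp(1) G L']) simp
    also have "\<dots> = exp (- ((of_int s + \<alpha>) * \<Gamma>)\<^sup>2 / (2 * \<mu>)) * exp (- ((of_int t + \<beta>) * \<Gamma>)\<^sup>2 / (2 * \<mu>))
        * exp (- ((of_int s + \<alpha>) * \<Gamma> - (of_int t + \<beta>) * \<Gamma>)\<^sup>2 / (2 * (2 * (2 * sq))))"
      by (simp only: exp_add)
    also have "\<dots> = C * W p"
      using C0 sq by (simp add: p W_def w_def gauss_def C_def)
    finally show ?thesis by (simp add: \<phi>_def p)
  qed
  have wpos: "w c s > 0" for c s by (simp add: w_def)
  have ws: "w c summable_on UNIV" for c unfolding w_def by (rule comb_w_summable[OF mu G])
  have Ws: "W summable_on UNIV"
  proof (rule summable_on_comparison_test)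
    show "(\<lambda>p. (case p of (s, t) \<Rightarrow> w \<alpha> s * w \<beta> t) * (1 / C)) summable_on UNIV"
      using summable_prod_real[of "w \<alpha>" "w \<beta>" UNIV UNIV] wpos ws
      by (intro summable_on_cmult_left) (auto simp: less_imp_le)
    show "W p \<le> (case p of (s, t) \<Rightarrow> w \<alpha> s * w \<beta> t) * (1 / C)" for p
    proof -
      obtain s t where p: "p = (s, t)" by (cases p)
      have "w \<alpha> s * w \<beta> t * gauss (2 * (2 * sq)) ((of_int s + \<alpha>) * \<Gamma> - (of_int t + \<beta>) * \<Gamma>) \<le> w \<alpha> s * w \<beta> t * (1 / C)"
        by (rule mult_left_mono) (use gauss_le[of "2 * (2 * sq)"] sq wpos in \<open>auto simp: C_def intro: less_imp_le\<close>)
      then show ?thesis by (simp add: W_def p)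
    qed
    show "0 \<le> W p" for p
      using wpos gauss_pos[of "2 * (2 * sq)"] sq by (auto simp: W_def split: prod.splits intro!: mult_nonneg_nonneg less_imp_le)
  qed
  have Es: "(\<lambda>(n, k). E n k) summable_on UNIV"
  proof -
    have "(\<lambda>p. (\<lambda>(n, k). E n k) (\<phi> p)) summable_on UNIV"
      unfolding EW by (rule summable_on_cmult_right[OF Ws])
    then show ?thesis using summable_on_reindex_bij_betw[OF bij] by blast
  qed
  have "(\<Sum>\<^sub>\<infinity>(n,k)\<in>(UNIV::(int\<times>int) set). E n k) = (\<Sum>\<^sub>\<infinity>p. (\<lambda>(n, k). E n k) (\<phi> p))"
    by (rule infsum_reindex_bij_betw[OF bij, symmetric])
  also have "\<dots> = C * (\<Sum>\<^sub>\<infinity>p. W p)" unfolding EW by (rule infsum_cmult_right')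
  also have "(\<Sum>\<^sub>\<infinity>p. W p) = (\<integral>q. comb_conv_gauss \<mu> \<Gamma> \<alpha> (2 * sq) q * comb_conv_gauss \<mu> \<Gamma> \<beta> (2 * sq) q \<partial>lborel)"
  proof -
    have v2: "2 * sq > 0" using sq by simp
    show ?thesis using comb_prod_integral[OF mu G v2, of \<alpha> \<beta>]
      by (simp add: W_def w_def case_prod_unfold)
  qed
  finally have sumE: "(\<Sum>\<^sub>\<infinity>(n,k)\<in>(UNIV::(int\<times>int) set). E n k) = C * (\<integral>q. comb_conv_gauss \<mu> \<Gamma> \<alpha> (2 * sq) q * comb_conv_gauss \<mu> \<Gamma> \<beta> (2 * sq) q \<partial>lborel)" .
  have const: "sqrt (1 / p3) * C = 2 * \<Gamma> / sqrt \<Lambda>"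
  proof -
    have "sqrt (1 / p3) * C = sqrt (1 / p3 * (2 * pi * (2 * (2 * sq))))" unfolding C_def by (rule real_sqrt_mult[symmetric])
    also have "1 / p3 * (2 * pi * (2 * (2 * sq))) = (2 * \<Gamma>)\<^sup>2 / \<Lambda>"
      using sq L by (simp add: p3_def field_simps power2_eq_square)
    also have "sqrt ((2 * \<Gamma>)\<^sup>2 / \<Lambda>) = 2 * \<Gamma> / sqrt \<Lambda>"
      using G unfolding real_sqrt_divide by (subst real_sqrt_abs) simp
    finally show ?thesis .
  qed
  have "(\<Sum>\<^sub>\<infinity>(n,m)\<in>(UNIV::(int\<times>int) set). complex_of_real (exp (- (pi * p0) * (real_of_int n + (\<alpha> + \<beta>))\<^sup>2)) *
            (complex_of_real (exp (- (pi * p3) * (real_of_int m)\<^sup>2)) * cis (2 * pi * real_of_int m * (\<beta> - (real_of_int n + (\<alpha> + \<beta>)) / 2))))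
      = complex_of_real (sqrt (1 / p3) * (\<Sum>\<^sub>\<infinity>(n,k)\<in>(UNIV::(int\<times>int) set). E n k))"
    unfolding E_def by (rule theta_poisson[OF p0 p3]) (use Es in \<open>simp add: E_def\<close>)
  also have "\<dots> = complex_of_real (2 * \<Gamma> / sqrt \<Lambda> * (\<integral>q. comb_conv_gauss \<mu> \<Gamma> \<alpha> (2 * sq) q * comb_conv_gauss \<mu> \<Gamma> \<beta> (2 * sq) q \<partial>lborel))"
    unfolding sumE const[symmetric] by (simp add: mult.assoc)
  finally show ?thesis by (simp add: \<mu>_def)
qed


lemma theta_eval:
  fixes ra rb :: real and A B :: rat
  shows "riemann_theta 2 (\<lambda>k. if k = 0 then A else 0) (\<lambda>k. if k = 1 then B else 0) (\<lambda>_. 0)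
      (\<lambda>k l. if k = 0 \<and> l = 0 then \<i> * complex_of_real ra
             else if k = 1 \<and> l = 1 then \<i> * complex_of_real rb
             else - 1/2)
    = (\<Sum>\<^sub>\<infinity>(n,m)\<in>(UNIV::(int\<times>int) set). complex_of_real (exp (- (pi * ra) * (real_of_int n + of_rat A)\<^sup>2)) *
            (complex_of_real (exp (- (pi * rb) * (real_of_int m)\<^sup>2)) * cis (2 * pi * real_of_int m * (of_rat B - (real_of_int n + of_rat A) / 2))))"
  unfolding theta2_reindex
  apply (rule infsum_cong)
  subgoal for p
    using theta_term[where ra=ra and rb=rb and A=A and B=B and n="fst p" and m="snd p"]
    by (simp add: case_prod_unfold)
  done


theorem corollary4:
  fixes d j j' :: nat and sq sp \<Gamma> :: real
  assumes "d \<ge> 1" and "j < d" and "j' < d"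
    and "0 < sq" and "sq < 1/2" and "0 < sp" and "sp < 1/2" and "\<Gamma> > 0"
  shows "let \<Lambda> = 1 - 4 * sq * sp;
             \<tau> = (\<lambda>k l. if k = 0 \<and> l = 0 then \<i> * complex_of_real (sp * \<Gamma>\<^sup>2 / (2 * pi * \<Lambda>))
                        else if k = 1 \<and> l = 1 then \<i> * complex_of_real (2 * pi * sq * \<Lambda> / \<Gamma>\<^sup>2)
                        else - 1/2)
         in complex_of_real (gkp_N sq sp \<Gamma> d j)
              = riemann_theta 2 (\<lambda>k. if k = 0 then 2 * of_nat j / of_nat d else 0)
                                (\<lambda>k. if k = 1 then of_nat j / of_nat d else 0) (\<lambda>_. 0) \<tau>
          \<and> complex_of_real (gkp_inner sq sp \<Gamma> d j' j)
              = riemann_theta 2 (\<lambda>k. if k = 0 then (of_nat j + of_nat j') / of_nat d else 0)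
                                (\<lambda>k. if k = 1 then of_nat j' / of_nat d else 0) (\<lambda>_. 0) \<tau>
                / complex_of_real (sqrt (gkp_N sq sp \<Gamma> d j * gkp_N sq sp \<Gamma> d j'))"
proof -
  define \<Lambda> where "\<Lambda> = 1 - 4 * sq * sp"
  have sq: "0 < sq" "sq < 1/2" and sp: "0 < sp" "sp < 1/2" and G: "\<Gamma> > 0" using assms by auto
  have "sq * sp < (1/2) * (1/2)" using sq sp by (intro mult_strict_mono) auto
  then have L: "\<Lambda> > 0" by (simp add: \<Lambda>_def)
  define K where "K = 2 * \<Gamma> / sqrt \<Lambda>"
  have K0: "K > 0" using G L by (simp add: K_def)
  define f where "f c q = comb_conv_gauss (\<Lambda> / (2 * sp)) \<Gamma> c (2 * sq) q" for c q
  have prof: "gkp_profile sq sp \<Gamma> d i q = f (real i / real d) q" for i q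
    by (simp add: gkp_profile_def f_def gkp_Lambda_def \<Lambda>_def)
  have Ndef: "gkp_N sq sp \<Gamma> d i = K * (\<integral>q. f (real i / real d) q * f (real i / real d) q \<partial>lborel)" for i
    by (simp add: gkp_N_def K_def gkp_Lambda_def \<Lambda>_def prof power2_eq_square)
  define \<tau> where "\<tau> = (\<lambda>(k::nat) (l::nat). if k = 0 \<and> l = 0 then \<i> * complex_of_real (sp * \<Gamma>\<^sup>2 / (2 * pi * \<Lambda>))
                        else if k = 1 \<and> l = 1 then \<i> * complex_of_real (2 * pi * sq * \<Lambda> / \<Gamma>\<^sup>2)
                        else - 1/2)"
  have key: "riemann_theta 2 (\<lambda>k. if k = 0 then A else 0) (\<lambda>k. if k = 1 then B else 0) (\<lambda>_. 0) \<tau>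
      = complex_of_real (K * (\<integral>q. f \<alpha> q * f \<beta> q \<partial>lborel))"
    if AB: "of_rat A = \<alpha> + \<beta>" "of_rat B = \<beta>" for A B :: rat and \<alpha> \<beta> :: real
  proof -
    have "riemann_theta 2 (\<lambda>k. if k = 0 then A else 0) (\<lambda>k. if k = 1 then B else 0) (\<lambda>_. 0) \<tau>
      = (\<Sum>\<^sub>\<infinity>(n,m)\<in>(UNIV::(int\<times>int) set). complex_of_real (exp (- (pi * (sp * \<Gamma>\<^sup>2 / (2 * pi * \<Lambda>))) * (real_of_int n + (\<alpha> + \<beta>))\<^sup>2)) *
            (complex_of_real (exp (- (pi * (2 * pi * sq * \<Lambda> / \<Gamma>\<^sup>2)) * (real_of_int m)\<^sup>2)) * cis (2 * pi * real_of_int m * (\<beta> - (real_of_int n + (\<alpha> + \<beta>)) / 2))))"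
      unfolding \<tau>_def theta_eval AB ..
    also have "\<dots> = complex_of_real (K * (\<integral>q. f \<alpha> q * f \<beta> q \<partial>lborel))"
      unfolding main_identity[OF sq sp G, of \<alpha> \<beta>, folded \<Lambda>_def] K_def f_def ..
    finally show ?thesis .
  qed
  have d0: "real d > 0" using assms(1) by simp
  have N_eq: "complex_of_real (gkp_N sq sp \<Gamma> d j)
      = riemann_theta 2 (\<lambda>k. if k = 0 then 2 * of_nat j / of_nat d else 0) (\<lambda>k. if k = 1 then of_nat j / of_nat d else 0) (\<lambda>_. 0) \<tau>"
    by (subst key[of _ "real j / real d" "real j / real d"]) (auto simp: Ndef of_rat_divide of_rat_mult add_divide_distrib)
  have wf: "gkp_wf sq sp \<Gamma> d i q = sqrt (K / gkp_N sq sp \<Gamma> d i) * f (real i / real d) q" for i q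
    by (simp add: gkp_wf_def K_def gkp_Lambda_def \<Lambda>_def prof)
  have inner: "gkp_inner sq sp \<Gamma> d j' j
      = K * (\<integral>q. f (real j / real d) q * f (real j' / real d) q \<partial>lborel) / sqrt (gkp_N sq sp \<Gamma> d j * gkp_N sq sp \<Gamma> d j')"
  proof -
    have "gkp_inner sq sp \<Gamma> d j' j = (\<integral>q. (sqrt (K / gkp_N sq sp \<Gamma> d j') * sqrt (K / gkp_N sq sp \<Gamma> d j)) * (f (real j / real d) q * f (real j' / real d) q) \<partial>lborel)"
      unfolding gkp_inner_def wf by (rule Bochner_Integration.integral_cong) (simp_all add: mult_ac)
    also have "\<dots> = (sqrt (K / gkp_N sq sp \<Gamma> d j') * sqrt (K / gkp_N sq sp \<Gamma> d j)) * (\<integral>q. f (real j / real d) q * f (real j' / real d) q \<partial>lborel)"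
      by (rule integral_mult_right_zero)
    also have "sqrt (K / gkp_N sq sp \<Gamma> d j') * sqrt (K / gkp_N sq sp \<Gamma> d j) = K / sqrt (gkp_N sq sp \<Gamma> d j * gkp_N sq sp \<Gamma> d j')"
    proof -
      have "sqrt (K / gkp_N sq sp \<Gamma> d j') * sqrt (K / gkp_N sq sp \<Gamma> d j) = sqrt (K\<^sup>2 / (gkp_N sq sp \<Gamma> d j * gkp_N sq sp \<Gamma> d j'))"
        by (simp add: real_sqrt_mult[symmetric] power2_eq_square mult_ac)
      also have "\<dots> = K / sqrt (gkp_N sq sp \<Gamma> d j * gkp_N sq sp \<Gamma> d j')"
        using K0 by (simp add: real_sqrt_divide)
      finally show ?thesis .
    qed
    finally show ?thesis by simp
  qed
  have I_eq: "complex_of_real (gkp_inner sq sp \<Gamma> d j' j)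
      = riemann_theta 2 (\<lambda>k. if k = 0 then (of_nat j + of_nat j') / of_nat d else 0) (\<lambda>k. if k = 1 then of_nat j' / of_nat d else 0) (\<lambda>_. 0) \<tau>
        / complex_of_real (sqrt (gkp_N sq sp \<Gamma> d j * gkp_N sq sp \<Gamma> d j'))"
    by (subst key[of _ "real j / real d" "real j' / real d"]) (auto simp: inner of_rat_divide of_rat_add add_divide_distrib)
  show ?thesis unfolding Let_def \<Lambda>_def[symmetric] \<tau>_def[symmetric] using N_eq I_eq by (rule conjI)
qed

end
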